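(* For any $\delta\in(0,1]$ there exists $b(\delta)>0$ such that for any $\varepsilon\in(0,b)$ there exist $C=C(\varepsilon,\delta)<\infty$ and $c=c(\varepsilon,\delta)>0$ such that the following holds. Let $G=(V,E)$ be a connected simple graph on $n$ vertices with minimal degree at least $\delta n$, and let $V=V_1\sqcup\dots\sqcup V_k$ be an $(\varepsilon,\delta,n^{1.5})$-good decomposition of $G$ with parameter $\theta$. Then for every set $W\subseteq V$ with $|W\cap V_i|\ge\varepsilon^8\theta\sqrt n$ for every $i\in[k]$, \[ \sum_{t=1}^\infty(t+1)\sup_{v\in V}\mathbf p^t_W(v,v)\le C. \]
   Context: $\mathbf p^t_W(v,v)=\Pr_v(X_t=v,\ \tau_W>t)$, where $X$ is the simple random walk on $G$ started at $v$ and $\tau_W$ is the hitting time of $W$. Writing $\deg(v,U)$ for the number of edges from $v$ to $U$, $E(A,B)$ for edges between $A,B$ and $G[U]$ for induced subgraphs, an $(\varepsilon,\delta,\beta)$-good decomposition $V=V_1\sqcup\dots\sqcup V_k$ with parameter $\theta\in[\varepsilon^{11\cdot2^{2/\delta}},\varepsilon]$ means, for all $i\in[k]$: $k\le2/\delta$; $|V_i|\ge\delta n/2$; the spectral gap ($1-\lambda_2$ of the simple random walk transition matrix) of $G[V_i]$ is at least $\frac{\delta^{15}\theta\beta}{2^{31}n^2}$; $\deg(v,V_i)\ge\delta^4n/40$ for $v\in V_i$; $|E(V_i,V\setminus V_i)|\le\varepsilon^9\theta^2\beta$. *)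

theory Defs
  imports Complex_Main "Jordan_Normal_Form.Char_Poly"
begin

definition simple_graph :: "nat set \<Rightarrow> (nat \<Rightarrow> nat \<Rightarrow> bool) \<Rightarrow> bool" where
  "simple_graph V E \<longleftrightarrow> finite V \<and> V \<noteq> {} \<and>
     (\<forall>u w. E u w \<longrightarrow> u \<in> V \<and> w \<in> V) \<and> (\<forall>u w. E u w \<longrightarrow> E w u) \<and> (\<forall>u. \<not> E u u)"

definition connected_graph :: "nat set \<Rightarrow> (nat \<Rightarrow> nat \<Rightarrow> bool) \<Rightarrow> bool" where
  "connected_graph V E \<longleftrightarrow> (\<forall>u\<in>V. \<forall>w\<in>V. (u, w) \<in> {(x, y). E x y}\<^sup>*)"

definition deg_into :: "(nat \<Rightarrow> nat \<Rightarrow> bool) \<Rightarrow> nat \<Rightarrow> nat set \<Rightarrow> nat" where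
  "deg_into E v U = card {u \<in> U. E v u}"

definition edges_between :: "(nat \<Rightarrow> nat \<Rightarrow> bool) \<Rightarrow> nat set \<Rightarrow> nat set \<Rightarrow> nat" where
  "edges_between E A B = card {(u, w). u \<in> A \<and> w \<in> B \<and> E u w}"

definition srw_trans :: "(nat \<Rightarrow> nat \<Rightarrow> bool) \<Rightarrow> nat set \<Rightarrow> nat \<Rightarrow> nat \<Rightarrow> real" where
  "srw_trans E U u w = (if u \<in> U \<and> w \<in> U \<and> E u w then 1 / real (deg_into E u U) else 0)"

text \<open>An (arbitrary) enumeration of a finite set by 0..<card U; the spectrum does not depend on it.\<close>
definition set_enum :: "nat set \<Rightarrow> nat \<Rightarrow> nat" where
  "set_enum U = (SOME f. bij_betw f {0..<card U} U)"

definition srw_matrix :: "(nat \<Rightarrow> nat \<Rightarrow> bool) \<Rightarrow> nat set \<Rightarrow> real mat" where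
  "srw_matrix E U = mat (card U) (card U)
     (\<lambda>(i, j). srw_trans E U (set_enum U i) (set_enum U j))"

text \<open>Second largest eigenvalue (counted with multiplicity): the largest real root \<lambda>
  of the characteristic polynomial such that at least two eigenvalues (with multiplicity)
  are \<ge> \<lambda>.\<close>
definition lambda2 :: "real mat \<Rightarrow> real" where
  "lambda2 A = Max {l. poly (char_poly A) l = 0 \<and>
      (\<Sum>m\<in>{m. poly (char_poly A) m = 0 \<and> m \<ge> l}. order m (char_poly A)) \<ge> 2}"

definition spectral_gap :: "(nat \<Rightarrow> nat \<Rightarrow> bool) \<Rightarrow> nat set \<Rightarrow> real" where
  "spectral_gap E U = 1 - lambda2 (srw_matrix E U)"

text \<open>Killed walk: killed_walk V E W v t x = Pr_v(X_t = x, tau_W > t) for the simple random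
  walk X on G = (V,E) started at v, where tau_W = min {s \<ge> 0. X_s \<in> W}.\<close>
primrec killed_walk :: "nat set \<Rightarrow> (nat \<Rightarrow> nat \<Rightarrow> bool) \<Rightarrow> nat set \<Rightarrow> nat \<Rightarrow> nat \<Rightarrow> nat \<Rightarrow> real" where
  "killed_walk V E W v 0 x = (if x = v \<and> x \<notin> W then 1 else 0)"
| "killed_walk V E W v (Suc t) x =
     (if x \<in> W then 0 else (\<Sum>u\<in>V. killed_walk V E W v t u * srw_trans E V u x))"

definition pW :: "nat set \<Rightarrow> (nat \<Rightarrow> nat \<Rightarrow> bool) \<Rightarrow> nat set \<Rightarrow> nat \<Rightarrow> nat \<Rightarrow> real" where
  "pW V E W t v = killed_walk V E W v t v"

definition good_decomposition ::
  "nat set \<Rightarrow> (nat \<Rightarrow> nat \<Rightarrow> bool) \<Rightarrow> real \<Rightarrow> real \<Rightarrow> real \<Rightarrow> real \<Rightarrow> nat \<Rightarrow> (nat \<Rightarrow> nat set) \<Rightarrow> bool" where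
  "good_decomposition V E \<epsilon> \<delta> \<beta> \<theta> k Vs \<longleftrightarrow>
     (let n = real (card V) in
      (\<Union>i<k. Vs i) = V \<and> (\<forall>i<k. \<forall>j<k. i \<noteq> j \<longrightarrow> Vs i \<inter> Vs j = {}) \<and>
      \<epsilon> powr (11 * 2 powr (2 / \<delta>)) \<le> \<theta> \<and> \<theta> \<le> \<epsilon> \<and>
      real k \<le> 2 / \<delta> \<and>
      (\<forall>i<k.
         real (card (Vs i)) \<ge> \<delta> * n / 2 \<and>
         spectral_gap E (Vs i) \<ge> \<delta>^15 * \<theta> * \<beta> / (2^31 * n^2) \<and>
         (\<forall>v\<in>Vs i. real (deg_into E v (Vs i)) \<ge> \<delta>^4 * n / 40) \<and>
         real (edges_between E (Vs i) (V - Vs i)) \<le> \<epsilon>^9 * \<theta>^2 * \<beta>))"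

end

theory Submission
  imports Defs "HOL-Analysis.Function_Topology" "HOL-Analysis.Convex"
begin

lemma order_ge2_two_eigvecs:
  fixes A :: "real mat"
  assumes A: "A \<in> carrier_mat n n"
    and v: "v \<in> carrier_vec n" and w: "w \<in> carrier_vec n"
    and Av: "A *\<^sub>v v = e \<cdot>\<^sub>v v" and Aw: "A *\<^sub>v w = e \<cdot>\<^sub>v w"
    and indep: "\<And>a b. a \<cdot>\<^sub>v v + b \<cdot>\<^sub>v w = 0\<^sub>v n \<Longrightarrow> a = 0 \<and> b = 0"
  shows "order e (char_poly A) \<ge> 2"
proof -
  have v0: "v \<noteq> 0\<^sub>v n"
  proof
    assume "v = 0\<^sub>v n"
    hence "1 \<cdot>\<^sub>v v + 0 \<cdot>\<^sub>v w = 0\<^sub>v n" using v w by auto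
    from indep[OF this] show False by simp
  qed
  hence n1: "n \<ge> 1" using v by (cases n) auto
  define p where "p = char_poly A"
  have degp: "degree p = n" and p0: "p \<noteq> 0"
    using degree_monic_char_poly[OF A] unfolding p_def by auto
  have ev: "eigenvalue A e" unfolding eigenvalue_def eigenvector_def
    using v v0 Av A by auto
  have root: "poly p e = 0" using ev eigenvalue_root_char_poly[OF A] p_def by auto
  have delroot: "poly (char_poly (mat_delete A i i)) e = 0" if i: "i < n" for i
  proof -
    obtain z where z: "z \<in> carrier_vec n" "z \<noteq> 0\<^sub>v n" "z $ i = 0" "A *\<^sub>v z = e \<cdot>\<^sub>v z"
    proof (cases "v $ i = 0")
      case True thus ?thesis using that[of v] v v0 Av by auto
    next
      case False
      define z where "z = (- (w $ i / v $ i)) \<cdot>\<^sub>v v + 1 \<cdot>\<^sub>v w"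
      have zc: "z \<in> carrier_vec n" using v w z_def by auto
      have "z \<noteq> 0\<^sub>v n" using indep[of "- (w $ i / v $ i)" 1] z_def by auto
      moreover have "z $ i = 0" using False i v w unfolding z_def by auto
      moreover have "A *\<^sub>v z = e \<cdot>\<^sub>v z"
        unfolding z_def using A v w Av Aw
        by (simp add: mult_add_distrib_mat_vec mult_mat_vec smult_add_distrib_vec[of _ n]
             smult_smult_assoc mult.commute)
      ultimately show ?thesis using that zc by blast
    qed
    obtain m where nm: "n = Suc m" using i by (cases n) auto
    define B where "B = mat_delete A i i"
    have B: "B \<in> carrier_mat m m" using mat_delete_carrier[OF A] nm B_def by auto
    define z' where "z' = vec m (\<lambda>j. z $ insert_index i j)"
    have z'c: "z' \<in> carrier_vec m" unfolding z'_def by auto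
    have inj: "inj_on (insert_index i) {0..<m}"
      unfolding inj_on_def insert_index_def by auto
    have img: "insert_index i ` {0..<m} = {0..<n} - {i}"
      using insert_index_image[of i m] i nm by auto
    have z'0: "z' \<noteq> 0\<^sub>v m"
    proof
      assume zz: "z' = 0\<^sub>v m"
      have "z = 0\<^sub>v n"
      proof (rule eq_vecI)
        fix k assume k: "k < dim_vec (0\<^sub>v n :: real vec)"
        hence k: "k < n" by simp
        show "z $ k = 0\<^sub>v n $ k"
        proof (cases "k = i")
          case True thus ?thesis using z k by simp
        next
          case False
          then obtain j where j: "j < m" "k = insert_index i j" using img k
            by (metis (no_types, lifting) DiffI atLeastLessThan_iff empty_iff imageE insertE zero_le)
          have "z' $ j = 0" using zz j by simp
          thus ?thesis using j k unfolding z'_def by simp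
        qed
      qed (use z in auto)
      with z show False by simp
    qed
    have "B *\<^sub>v z' = e \<cdot>\<^sub>v z'"
    proof (rule eq_vecI)
      fix j assume "j < dim_vec (e \<cdot>\<^sub>v z')"
      hence j: "j < m" using z'c by simp
      have ij: "insert_index i j < n" using j nm unfolding insert_index_def by auto
      have "(B *\<^sub>v z') $ j = (\<Sum>k<m. B $$ (j, k) * z' $ k)"
        using B j z'c by (simp add: mult_mat_vec_def scalar_prod_def sum.atLeast0_lessThan_Suc lessThan_atLeast0)
      also have "\<dots> = (\<Sum>k\<in>{0..<m}. A $$ (insert_index i j, insert_index i k) * z $ insert_index i k)"
        by (rule sum.cong) (use j nm A in \<open>auto simp: B_def z'_def mat_delete_def insert_index_def\<close>)
      also have "\<dots> = (\<Sum>k\<in>{0..<n} - {i}. A $$ (insert_index i j, k) * z $ k)"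
        using sum.reindex[OF inj, of "\<lambda>k. A $$ (insert_index i j, k) * z $ k"] img by simp
      also have "\<dots> = (\<Sum>k\<in>{0..<n}. A $$ (insert_index i j, k) * z $ k)"
        using z(3) i by (subst (2) sum.remove[of _ i]) auto
      also have "\<dots> = (A *\<^sub>v z) $ insert_index i j"
        using A ij z(1) by (simp add: mult_mat_vec_def scalar_prod_def)
      also have "\<dots> = e * z $ insert_index i j" using z(4) ij z(1) by simp
      finally show "(B *\<^sub>v z') $ j = (e \<cdot>\<^sub>v z') $ j" using j unfolding z'_def by simp
    qed (use B z'c in auto)
    hence "eigenvalue B e" unfolding eigenvalue_def eigenvector_def
      using z'c z'0 B by auto
    thus ?thesis using eigenvalue_root_char_poly[OF B] B_def by auto
  qed
  have "poly (pderiv p) e = 0"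
    unfolding p_def pderiv_char_poly[OF A] poly_sum using delroot by simp
  moreover have "pderiv p \<noteq> 0" using degp n1 by (simp add: pderiv_eq_0_iff)
  ultimately have "order e (pderiv p) \<noteq> 0" using order_root by blast
  thus ?thesis using order_pderiv[OF p0 root] p_def by simp
qed

lemma abs_le_1_plus_sq: "\<bar>t::real\<bar> \<le> 1 + t^2"
proof -
  have "0 \<le> (\<bar>t\<bar> - 1/2)^2" by simp
  hence "0 \<le> \<bar>t\<bar>^2 - \<bar>t\<bar> + 1/4" by (simp add: power2_eq_square algebra_simps)
  thus ?thesis by simp
qed

lemma max_quadratic_on_sphere:
  fixes U :: "nat set" and dd :: "nat \<Rightarrow> real" and a :: "nat \<Rightarrow> nat \<Rightarrow> real"
  assumes U: "finite U" and dpos: "\<And>x. x \<in> U \<Longrightarrow> dd x > 0"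
    and ne: "f \<in> {w. (\<forall>x. x \<notin> U \<longrightarrow> w x = 0) \<and> (\<Sum>x\<in>U. dd x * w x) = 0 \<and> (\<Sum>x\<in>U. dd x * (w x)^2) = 1}"
  shows "\<exists>u \<in> {w. (\<forall>x. x \<notin> U \<longrightarrow> w x = 0) \<and> (\<Sum>x\<in>U. dd x * w x) = 0 \<and> (\<Sum>x\<in>U. dd x * (w x)^2) = 1}.
           \<forall>w \<in> {w. (\<forall>x. x \<notin> U \<longrightarrow> w x = 0) \<and> (\<Sum>x\<in>U. dd x * w x) = 0 \<and> (\<Sum>x\<in>U. dd x * (w x)^2) = 1}.
             (\<Sum>x\<in>U. \<Sum>y\<in>U. a x y * w x * w y) \<le> (\<Sum>x\<in>U. \<Sum>y\<in>U. a x y * u x * u y)"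
proof -
  define K where "K = {w::nat\<Rightarrow>real. (\<forall>x. x \<notin> U \<longrightarrow> w x = 0) \<and> (\<Sum>x\<in>U. dd x * w x) = 0 \<and> (\<Sum>x\<in>U. dd x * (w x)^2) = 1}"
  define S where "S = (\<lambda>x. if x \<in> U then {-(1 + 1/dd x)..1 + 1/dd x} else {0::real})"
  have cS: "compact (Pi UNIV S)"
  proof -
    have "compactin (product_topology (\<lambda>_. euclidean) UNIV) (Pi\<^sub>E UNIV S)"
      unfolding compactin_PiE by (auto simp: S_def compactin_euclidean_iff)
    thus ?thesis by (simp add: euclidean_product_topology compactin_euclidean_iff PiE_UNIV_domain)
  qed
  have KS: "K \<subseteq> Pi UNIV S"
  proof
    fix w assume w: "w \<in> K"
    show "w \<in> Pi UNIV S"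
    proof (rule Pi_I)
      fix x
      show "w x \<in> S x"
      proof (cases "x \<in> U")
        case True
        have "dd x * (w x)^2 \<le> (\<Sum>y\<in>U. dd y * (w y)^2)"
          by (rule member_le_sum) (use True U in \<open>auto intro!: mult_nonneg_nonneg simp: dpos less_imp_le\<close>)
        hence "dd x * (w x)^2 \<le> 1" using w K_def by auto
        hence "(w x)^2 \<le> 1 / dd x" using dpos[OF True] by (simp add: field_simps)
        hence "\<bar>w x\<bar> \<le> 1 + 1 / dd x" using abs_le_1_plus_sq[of "w x"] by linarith
        thus ?thesis using True S_def by auto
      next
        case False thus ?thesis using w K_def S_def by auto
      qed
    qed
  qed
  have cl: "closed K"
  proof -
    have "K = (\<Inter>x\<in>-U. {w. w x = 0}) \<inter> {w. (\<Sum>x\<in>U. dd x * w x) = 0} \<inter> {w. (\<Sum>x\<in>U. dd x * (w x)^2) = 1}"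
      unfolding K_def by auto
    moreover have "closed (\<Inter>x\<in>-U. {w::nat\<Rightarrow>real. w x = 0})"
      by (intro closed_INT ballI closed_Collect_eq) (auto intro: continuous_intros)
    moreover have "closed {w::nat\<Rightarrow>real. (\<Sum>x\<in>U. dd x * w x) = 0}"
      by (intro closed_Collect_eq) (auto intro!: continuous_intros continuous_on_product_coordinates)
    moreover have "closed {w::nat\<Rightarrow>real. (\<Sum>x\<in>U. dd x * (w x)^2) = 1}"
      by (intro closed_Collect_eq) (auto intro!: continuous_intros continuous_on_product_coordinates)
    ultimately show ?thesis by auto
  qed
  have cK: "compact K" using compact_Int_closed[OF cS cl] KS by (simp add: Int_absorb1)
  have cont: "continuous_on K (\<lambda>w. \<Sum>x\<in>U. \<Sum>y\<in>U. a x y * w x * w y)"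
    by (auto intro!: continuous_intros continuous_on_product_coordinates continuous_on_subset[OF continuous_on_product_coordinates])
  have "K \<noteq> {}" using ne K_def by auto
  from continuous_attains_sup[OF cK this cont] show ?thesis unfolding K_def by blast
qed

lemma quad_nonpos_imp_zero:
  fixes \<alpha> \<beta> :: real
  assumes "\<And>t. 2 * t * \<alpha> + t^2 * \<beta> \<le> 0"
  shows "\<alpha> = 0"
proof (rule ccontr)
  assume a: "\<alpha> \<noteq> 0"
  define t where "t = \<alpha> / (\<bar>\<beta>\<bar> + 1)"
  have pos: "\<bar>\<beta>\<bar> + 1 > 0" by simp
  have at: "\<alpha> = t * (\<bar>\<beta>\<bar> + 1)" unfolding t_def using pos by simp
  have t0: "t \<noteq> 0" using a at by auto
  have "2 * t * \<alpha> + t^2 * \<beta> = t^2 * (2 * \<bar>\<beta>\<bar> + 2 + \<beta>)"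
    unfolding at by (simp add: algebra_simps power2_eq_square)
  moreover have "2 * \<bar>\<beta>\<bar> + 2 + \<beta> > 0" by (cases "\<beta> \<ge> 0") auto
  moreover have "t^2 > 0" using t0 by simp
  ultimately have "2 * t * \<alpha> + t^2 * \<beta> > 0" by simp
  with assms[of t] show False by simp
qed

lemma first_order_eigen:
  fixes U :: "nat set" and dd :: "nat \<Rightarrow> real" and a :: "nat \<Rightarrow> nat \<Rightarrow> real"
  assumes U: "finite U" and dpos: "\<And>x. x \<in> U \<Longrightarrow> dd x > 0"
    and dd: "\<And>x. x \<in> U \<Longrightarrow> dd x = (\<Sum>y\<in>U. a x y)"
    and sym: "\<And>x y. a x y = a y x"
    and u: "\<forall>x. x \<notin> U \<longrightarrow> u x = 0" "(\<Sum>x\<in>U. dd x * u x) = 0" "(\<Sum>x\<in>U. dd x * (u x)^2) = 1"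
    and max: "\<And>w. (\<forall>x. x \<notin> U \<longrightarrow> w x = 0) \<Longrightarrow> (\<Sum>x\<in>U. dd x * w x) = 0 \<Longrightarrow> (\<Sum>x\<in>U. dd x * (w x)^2) = 1
        \<Longrightarrow> (\<Sum>x\<in>U. \<Sum>y\<in>U. a x y * w x * w y) \<le> M"
    and M: "M = (\<Sum>x\<in>U. \<Sum>y\<in>U. a x y * u x * u y)"
  shows "\<And>x. x \<in> U \<Longrightarrow> (\<Sum>y\<in>U. a x y * u y) = M * dd x * u x"
proof -
  let ?F = "\<lambda>w. \<Sum>x\<in>U. \<Sum>y\<in>U. a x y * w x * w y"
  let ?N = "\<lambda>w. \<Sum>x\<in>U. dd x * (w x)^2"
  have hom: "?F w \<le> M * ?N w" if w0: "\<forall>x. x \<notin> U \<longrightarrow> w x = 0" and w1: "(\<Sum>x\<in>U. dd x * w x) = 0" for w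
  proof (cases "?N w = 0")
    case True
    have "\<forall>x\<in>U. dd x * (w x)^2 = 0"
      using True sum_nonneg_eq_0_iff[OF U, of "\<lambda>x. dd x * (w x)^2"] dpos
      by (simp add: less_imp_le)
    have "\<forall>x\<in>U. w x = 0"
    proof
      fix x assume "x \<in> U"
      with \<open>\<forall>x\<in>U. dd x * (w x)^2 = 0\<close> dpos[of x] show "w x = 0" by (metis less_irrefl mult_eq_0_iff power_eq_0_iff)
    qed
    thus ?thesis using True by simp
  next
    case False
    have Npos: "?N w > 0" using False
      by (metis (no_types, lifting) dpos less_eq_real_def mult_nonneg_nonneg sum_nonneg zero_le_power2)
    define s where "s = sqrt (?N w)"
    have s: "s > 0" "s^2 = ?N w" using Npos s_def by auto
    define w' where "w' = (\<lambda>x. w x / s)"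
    have "?F w' \<le> M"
    proof (rule max)
      show "\<forall>x. x \<notin> U \<longrightarrow> w' x = 0" using w0 w'_def by auto
      show "(\<Sum>x\<in>U. dd x * w' x) = 0" using w1 unfolding w'_def
        by (simp add: sum_divide_distrib[symmetric] times_divide_eq_right)
      have "(\<Sum>x\<in>U. dd x * (w' x)^2) = ?N w / s^2" unfolding w'_def
        by (simp add: sum_divide_distrib power_divide)
      thus "(\<Sum>x\<in>U. dd x * (w' x)^2) = 1" using s Npos by simp
    qed
    moreover have "?F w' = ?F w / s^2" unfolding w'_def
      by (simp add: sum_divide_distrib power2_eq_square)
    ultimately show ?thesis using s Npos by (simp add: pos_divide_le_eq)
  qed
  define z where "z = (\<lambda>x. (\<Sum>y\<in>U. a x y * u y) - M * dd x * u x)"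
  have orth: "(\<Sum>x\<in>U. v x * z x) = 0" if v0: "\<forall>x. x \<notin> U \<longrightarrow> v x = 0" and v1: "(\<Sum>x\<in>U. dd x * v x) = 0" for v
  proof -
    define B where "B = (\<Sum>x\<in>U. \<Sum>y\<in>U. a x y * u x * v y)"
    define C where "C = (\<Sum>x\<in>U. dd x * u x * v x)"
    have BB: "(\<Sum>x\<in>U. \<Sum>y\<in>U. a x y * v x * u y) = B"
      unfolding B_def by (subst sum.swap) (simp add: sym mult.commute mult.left_commute)
    have "2 * t * (B - M * C) + t^2 * (?F v - M * ?N v) \<le> 0" for t
    proof -
      have "?F (\<lambda>x. u x + t * v x) \<le> M * ?N (\<lambda>x. u x + t * v x)"
        by (rule hom) (use u v0 v1 in \<open>auto simp: algebra_simps sum.distrib sum_distrib_left[symmetric]\<close>)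
      moreover have "?F (\<lambda>x. u x + t * v x) = M + 2 * t * B + t^2 * ?F v"
      proof -
        have "?F (\<lambda>x. u x + t * v x) = (\<Sum>x\<in>U. \<Sum>y\<in>U. a x y * u x * u y + t * (a x y * u x * v y) + t * (a x y * v x * u y) + t^2 * (a x y * v x * v y))"
          by (intro sum.cong refl) (simp add: algebra_simps power2_eq_square)
        also have "\<dots> = M + t * B + t * (\<Sum>x\<in>U. \<Sum>y\<in>U. a x y * v x * u y) + t^2 * ?F v"
          by (simp add: sum.distrib sum_distrib_left M B_def)
        finally show ?thesis using BB by simp
      qed
      moreover have "?N (\<lambda>x. u x + t * v x) = 1 + 2 * t * C + t^2 * ?N v"
      proof -
        have "?N (\<lambda>x. u x + t * v x) = (\<Sum>x\<in>U. dd x * (u x)^2 + 2 * t * (dd x * u x * v x) + t^2 * (dd x * (v x)^2))"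
          by (intro sum.cong refl) (simp add: algebra_simps power2_eq_square)
        also have "\<dots> = 1 + 2 * t * C + t^2 * ?N v"
          by (simp add: sum.distrib sum_distrib_left u C_def)
        finally show ?thesis .
      qed
      ultimately show ?thesis by (simp add: algebra_simps)
    qed
    hence "B - M * C = 0" by (rule quad_nonpos_imp_zero)
    moreover have "(\<Sum>x\<in>U. v x * z x) = B - M * C"
    proof -
      have "(\<Sum>x\<in>U. v x * z x) = (\<Sum>x\<in>U. \<Sum>y\<in>U. a x y * v x * u y) - M * C"
        unfolding z_def C_def
        by (simp add: right_diff_distrib sum_subtractf sum_distrib_left sum_distrib_right algebra_simps)
      thus ?thesis using BB by simp
    qed
    ultimately show ?thesis by simp
  qed
  have sumz: "(\<Sum>x\<in>U. z x) = 0"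
  proof -
    have "(\<Sum>x\<in>U. z x) = (\<Sum>x\<in>U. \<Sum>y\<in>U. a x y * u y) - M * (\<Sum>x\<in>U. dd x * u x)"
      unfolding z_def by (simp add: sum_subtractf sum_distrib_left algebra_simps)
    also have "(\<Sum>x\<in>U. \<Sum>y\<in>U. a x y * u y) = (\<Sum>y\<in>U. dd y * u y)"
      by (subst sum.swap) (simp add: dd sym sum_distrib_right[symmetric] cong: sum.cong)
    finally show ?thesis using u by simp
  qed
  define v where "v = (\<lambda>x. if x \<in> U then z x / dd x else 0)"
  have "(\<Sum>x\<in>U. v x * z x) = 0"
  proof (rule orth)
    show "\<forall>x. x \<notin> U \<longrightarrow> v x = 0" by (simp add: v_def)
    have "(\<Sum>x\<in>U. dd x * v x) = (\<Sum>x\<in>U. z x)"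
      by (rule sum.cong) (simp_all add: v_def less_imp_neq[OF dpos, symmetric])
    thus "(\<Sum>x\<in>U. dd x * v x) = 0" using sumz by simp
  qed
  hence "(\<Sum>x\<in>U. (z x)^2 / dd x) = 0"
    by (simp add: v_def power2_eq_square cong: sum.cong)
  hence "\<forall>x\<in>U. (z x)^2 / dd x = 0"
    using sum_nonneg_eq_0_iff[OF U, of "\<lambda>x. (z x)^2 / dd x"] dpos by (simp add: less_imp_le)
  hence "\<forall>x\<in>U. z x = 0" using dpos by (metis divide_eq_0_iff less_irrefl power_eq_0_iff)
  thus "\<And>x. x \<in> U \<Longrightarrow> (\<Sum>y\<in>U. a x y * u y) = M * dd x * u x" unfolding z_def by auto
qed

definition adj :: "(nat \<Rightarrow> nat \<Rightarrow> bool) \<Rightarrow> nat \<Rightarrow> nat \<Rightarrow> real" where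
  "adj E x y = (if E x y then 1 else 0)"

lemma deg_sum: "finite U \<Longrightarrow> real (deg_into E x U) = (\<Sum>y\<in>U. adj E x y)"
  unfolding deg_into_def adj_def by (simp add: sum.If_cases Int_def conj_commute)

lemma set_enum_bij: "finite U \<Longrightarrow> bij_betw (set_enum U) {0..<card U} U"
  unfolding set_enum_def by (rule someI_ex[OF ex_bij_betw_nat_finite])

lemma srw_mult_vec:
  assumes U: "finite U" and i: "i < card U"
  shows "(srw_matrix E U *\<^sub>v vec (card U) (\<lambda>j. u (set_enum U j))) $ i
         = (\<Sum>y\<in>U. srw_trans E U (set_enum U i) y * u y)"
proof -
  have "(srw_matrix E U *\<^sub>v vec (card U) (\<lambda>j. u (set_enum U j))) $ i
      = (\<Sum>j\<in>{0..<card U}. srw_trans E U (set_enum U i) (set_enum U j) * u (set_enum U j))"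
    using i by (simp add: srw_matrix_def mult_mat_vec_def scalar_prod_def)
  also have "\<dots> = (\<Sum>y\<in>U. srw_trans E U (set_enum U i) y * u y)"
    by (rule sum.reindex_bij_betw[OF set_enum_bij[OF U]])
  finally show ?thesis .
qed

lemma eigen_to_matrix:
  assumes U: "finite U" and dpos: "\<forall>x\<in>U. deg_into E x U > 0"
    and eq: "\<And>x. x \<in> U \<Longrightarrow> (\<Sum>y\<in>U. adj E x y * u y) = M * real (deg_into E x U) * u x"
  shows "srw_matrix E U *\<^sub>v vec (card U) (\<lambda>j. u (set_enum U j)) = M \<cdot>\<^sub>v vec (card U) (\<lambda>j. u (set_enum U j))"
proof (rule eq_vecI)
  fix i assume "i < dim_vec (M \<cdot>\<^sub>v vec (card U) (\<lambda>j. u (set_enum U j)))"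
  hence i: "i < card U" by simp
  define x where "x = set_enum U i"
  have x: "x \<in> U" using set_enum_bij[OF U] i unfolding x_def bij_betw_def by auto
  have d: "real (deg_into E x U) > 0" using dpos x by auto
  have "(\<Sum>y\<in>U. srw_trans E U x y * u y) = (\<Sum>y\<in>U. adj E x y * u y) / real (deg_into E x U)"
    unfolding sum_divide_distrib by (rule sum.cong) (use x in \<open>auto simp: srw_trans_def adj_def\<close>)
  also have "\<dots> = M * u x" using eq[OF x] d by simp
  finally show "(srw_matrix E U *\<^sub>v vec (card U) (\<lambda>j. u (set_enum U j))) $ i = (M \<cdot>\<^sub>v vec (card U) (\<lambda>j. u (set_enum U j))) $ i"
    using srw_mult_vec[OF U i] i x_def by simp
qed (simp add: srw_matrix_def)

lemma poincare_from_gap: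
  fixes E :: "nat \<Rightarrow> nat \<Rightarrow> bool" and U :: "nat set" and \<gamma> :: real and f :: "nat \<Rightarrow> real"
  assumes U: "finite U" and dpos: "\<forall>x\<in>U. deg_into E x U > 0"
    and sym: "\<forall>x y. E x y \<longrightarrow> E y x"
    and gap: "spectral_gap E U \<ge> \<gamma>" and gpos: "\<gamma> > 0"
    and f: "(\<Sum>x\<in>U. real (deg_into E x U) * f x) = 0"
  shows "(\<Sum>x\<in>U. \<Sum>y\<in>U. adj E x y * f x * f y) \<le> (1 - \<gamma>) * (\<Sum>x\<in>U. real (deg_into E x U) * (f x)^2)"
proof (rule ccontr)
  define d where "d = (\<lambda>x. real (deg_into E x U))"
  let ?F = "\<lambda>w. \<Sum>x\<in>U. \<Sum>y\<in>U. adj E x y * w x * w y"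
  let ?N = "\<lambda>w. \<Sum>x\<in>U. d x * (w x)^2"
  have dp: "\<And>x. x \<in> U \<Longrightarrow> d x > 0" using dpos d_def by auto
  have asym: "\<And>x y. adj E x y = adj E y x" using sym unfolding adj_def by auto
  assume "\<not> ?F f \<le> (1 - \<gamma>) * (\<Sum>x\<in>U. real (deg_into E x U) * (f x)^2)"
  hence big: "?F f > (1 - \<gamma>) * ?N f" unfolding d_def by simp
  have Nnn: "?N f \<ge> 0" using dp by (intro sum_nonneg) (simp add: less_imp_le)
  have Npos: "?N f > 0"
  proof (rule ccontr)
    assume "\<not> ?N f > 0"
    hence N0: "?N f = 0" using Nnn by simp
    have "\<forall>x\<in>U. d x * (f x)^2 = 0"
      using N0 sum_nonneg_eq_0_iff[OF U, of "\<lambda>x. d x * (f x)^2"] dp by (simp add: less_imp_le)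
    hence "\<forall>x\<in>U. f x = 0" using dp by (metis less_irrefl mult_eq_0_iff power_eq_0_iff)
    hence "?F f = 0" by simp
    with big N0 show False by simp
  qed
  define s where "s = sqrt (?N f)"
  have s: "s > 0" "s^2 = ?N f" using Npos s_def by auto
  define g where "g = (\<lambda>x. if x \<in> U then f x / s else 0)"
  define K where "K = {w. (\<forall>x. x \<notin> U \<longrightarrow> w x = 0) \<and> (\<Sum>x\<in>U. d x * w x) = 0 \<and> (\<Sum>x\<in>U. d x * (w x)^2) = 1}"
  have gK: "g \<in> K"
  proof -
    have "(\<Sum>x\<in>U. d x * g x) = (\<Sum>x\<in>U. d x * f x) / s"
      unfolding sum_divide_distrib by (rule sum.cong) (auto simp: g_def)
    moreover have "(\<Sum>x\<in>U. d x * (g x)^2) = ?N f / s^2"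
      unfolding sum_divide_distrib by (rule sum.cong) (auto simp: g_def power_divide)
    ultimately show ?thesis using f s unfolding K_def d_def g_def by auto
  qed
  have Fg: "?F g = ?F f / s^2"
    unfolding sum_divide_distrib by (intro sum.cong refl) (auto simp: g_def power2_eq_square)
  have Fg_big: "?F g > 1 - \<gamma>"
    using big Npos s Fg by (simp add: pos_less_divide_eq)
  have ex: "\<exists>u\<in>K. \<forall>w\<in>K. ?F w \<le> ?F u"
    unfolding K_def
    apply (rule max_quadratic_on_sphere[OF U, where f = g])
    using dp apply blast
    using gK unfolding K_def by blast
  then obtain u where uK: "u \<in> K" and umax: "\<forall>w\<in>K. ?F w \<le> ?F u" by blast
  define M where "M = ?F u"
  have "?F g \<le> M" using umax gK M_def by blast
  hence M_big: "M > 1 - \<gamma>" using Fg_big by simp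
  have u0: "\<forall>x. x \<notin> U \<longrightarrow> u x = 0" "(\<Sum>x\<in>U. d x * u x) = 0" "(\<Sum>x\<in>U. d x * (u x)^2) = 1"
    using uK K_def by auto
  have eig: "\<And>x. x \<in> U \<Longrightarrow> (\<Sum>y\<in>U. adj E x y * u y) = M * d x * u x"
    apply (rule first_order_eigen[where U=U and dd=d and a="adj E" and u=u and M=M])
    apply (rule U)
    apply (erule dp)
    apply (simp add: deg_sum[OF U] d_def)
    apply (rule asym)
    apply (rule u0(1))
    apply (rule u0(2))
    apply (rule u0(3))
    subgoal using umax unfolding K_def M_def by blast
    apply (rule M_def)
    apply assumption
    done
  define n where "n = card U"
  define P where "P = srw_matrix E U"
  have P: "P \<in> carrier_mat n n" unfolding P_def n_def srw_matrix_def by simp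
  define vu where "vu = vec n (\<lambda>j. u (set_enum U j))"
  define one where "one = vec n (\<lambda>j. (\<lambda>_. 1::real) (set_enum U j))"
  have Pu: "P *\<^sub>v vu = M \<cdot>\<^sub>v vu"
    unfolding P_def vu_def n_def by (rule eigen_to_matrix[OF U dpos]) (use eig d_def in auto)
  have P1: "P *\<^sub>v one = 1 \<cdot>\<^sub>v one"
    unfolding P_def one_def n_def
    by (rule eigen_to_matrix[OF U dpos]) (simp add: deg_sum[OF U])
  have bij: "bij_betw (set_enum U) {0..<n} U" using set_enum_bij[OF U] n_def by simp
  obtain x0 where x0: "x0 \<in> U" "u x0 \<noteq> 0"
  proof (rule ccontr)
    assume "\<not> thesis"
    hence "\<forall>x\<in>U. u x = 0" using that by blast
    thus False using u0(3) by simp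
  qed
  obtain i0 where i0: "i0 < n" "set_enum U i0 = x0"
    using bij x0 unfolding bij_betw_def by (metis atLeastLessThan_iff imageE)
  have sumd: "(\<Sum>x\<in>U. d x) > 0"
    using dp x0 U by (intro sum_pos2[of U x0]) (auto simp: less_imp_le)
  have indep: "a = 0 \<and> b = 0" if ab: "a \<cdot>\<^sub>v one + b \<cdot>\<^sub>v vu = 0\<^sub>v n" for a b
  proof -
    have pt: "a + b * u x = 0" if x: "x \<in> U" for x
    proof -
      obtain i where i: "i < n" "set_enum U i = x"
        using bij x unfolding bij_betw_def by (metis atLeastLessThan_iff imageE)
      have "(a \<cdot>\<^sub>v one + b \<cdot>\<^sub>v vu) $ i = 0" using ab i by simp
      thus ?thesis using i unfolding one_def vu_def by simp
    qed
    have "(\<Sum>x\<in>U. d x * (a + b * u x)) = 0" using pt by simp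
    hence "a * (\<Sum>x\<in>U. d x) + b * (\<Sum>x\<in>U. d x * u x) = 0"
      by (simp add: algebra_simps sum.distrib sum_distrib_left)
    hence a0: "a = 0" using u0(2) sumd by simp
    hence "b * u x0 = 0" using pt[OF x0(1)] by simp
    thus ?thesis using a0 x0 by simp
  qed
  have vuc: "vu \<in> carrier_vec n" "one \<in> carrier_vec n" unfolding vu_def one_def by auto
  define p where "p = char_poly P"
  have p0: "p \<noteq> 0" using degree_monic_char_poly[OF P] unfolding p_def by auto
  have rootM: "poly p M = 0"
  proof -
    have "vu \<noteq> 0\<^sub>v n"
    proof
      assume "vu = 0\<^sub>v n"
      hence "vu $ i0 = 0" using i0 by simp
      thus False using i0 x0 unfolding vu_def by simp
    qed
    hence "eigenvalue P M" unfolding eigenvalue_def eigenvector_def using vuc Pu P by auto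
    thus ?thesis using eigenvalue_root_char_poly[OF P] p_def by simp
  qed
  have root1: "poly p 1 = 0"
  proof -
    have "one \<noteq> 0\<^sub>v n"
    proof
      assume "one = 0\<^sub>v n"
      hence "one $ i0 = 0" using i0 by simp
      thus False using i0 unfolding one_def by simp
    qed
    hence "eigenvalue P 1" unfolding eigenvalue_def eigenvector_def using vuc P1 P by auto
    thus ?thesis using eigenvalue_root_char_poly[OF P] p_def by simp
  qed
  define l0 where "l0 = min M 1"
  define L where "L = {l. poly p l = 0 \<and> (\<Sum>m\<in>{m. poly p m = 0 \<and> m \<ge> l}. order m p) \<ge> 2}"
  have finR: "finite {m. poly p m = 0 \<and> m \<ge> l}" for l
    using poly_roots_finite[OF p0] by (rule finite_subset[rotated]) auto
  have l0L: "l0 \<in> L"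
  proof -
    have "poly p l0 = 0" using rootM root1 l0_def by (cases "M \<le> 1") (auto simp: min_def)
    moreover have "(\<Sum>m\<in>{m. poly p m = 0 \<and> m \<ge> l0}. order m p) \<ge> 2"
    proof (cases "M = 1")
      case True
      have "order 1 p \<ge> 2" unfolding p_def
      proof (rule order_ge2_two_eigvecs[OF P vuc(2) vuc(1) P1])
        show "P *\<^sub>v vu = 1 \<cdot>\<^sub>v vu" using Pu True by simp
        show "\<And>a b. a \<cdot>\<^sub>v one + b \<cdot>\<^sub>v vu = 0\<^sub>v n \<Longrightarrow> a = 0 \<and> b = 0" by (rule indep)
      qed
      moreover have "order 1 p \<le> (\<Sum>m\<in>{m. poly p m = 0 \<and> m \<ge> l0}. order m p)"
        by (rule member_le_sum) (use finR root1 l0_def in auto)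
      ultimately show ?thesis by simp
    next
      case False
      have "order 1 p \<noteq> 0" "order M p \<noteq> 0" using order_root p0 root1 rootM by auto
      hence "2 \<le> (\<Sum>m\<in>{1, M}. order m p)" using False by simp
      also have "\<dots> \<le> (\<Sum>m\<in>{m. poly p m = 0 \<and> m \<ge> l0}. order m p)"
        by (rule sum_mono2) (use finR root1 rootM l0_def in auto)
      finally show ?thesis .
    qed
    ultimately show ?thesis unfolding L_def by simp
  qed
  have finL: "finite L" using poly_roots_finite[OF p0] by (rule finite_subset[rotated]) (auto simp: L_def)
  have "lambda2 P = Max L" unfolding lambda2_def L_def p_def by simp
  hence "lambda2 P \<ge> l0" using Max_ge[OF finL l0L] by simp
  moreover have "l0 > 1 - \<gamma>" using M_big gpos l0_def by simp
  moreover have "lambda2 P \<le> 1 - \<gamma>" using gap unfolding spectral_gap_def P_def by simp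
  ultimately show False by simp
qed

definition dir :: "(nat \<Rightarrow> nat \<Rightarrow> bool) \<Rightarrow> nat set \<Rightarrow> (nat \<Rightarrow> real) \<Rightarrow> real" where
  "dir E U w = (\<Sum>x\<in>U. \<Sum>y\<in>U. adj E x y * (w x - w y)^2) / 2"

lemma adj_sym: "\<forall>x y. E x y \<longrightarrow> E y x \<Longrightarrow> adj E x y = adj E y x"
  unfolding adj_def by auto

lemma adj_nonneg: "adj E x y \<ge> 0" and adj_le1: "adj E x y \<le> 1"
  unfolding adj_def by auto

lemma dir_eq:
  assumes U: "finite U" and sym: "\<forall>x y. E x y \<longrightarrow> E y x"
  shows "dir E U w = (\<Sum>x\<in>U. real (deg_into E x U) * (w x)^2) - (\<Sum>x\<in>U. \<Sum>y\<in>U. adj E x y * w x * w y)"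
proof -
  have "(\<Sum>x\<in>U. \<Sum>y\<in>U. adj E x y * (w x - w y)^2)
      = (\<Sum>x\<in>U. \<Sum>y\<in>U. adj E x y * (w x)^2) + (\<Sum>x\<in>U. \<Sum>y\<in>U. adj E x y * (w y)^2)
        - 2 * (\<Sum>x\<in>U. \<Sum>y\<in>U. adj E x y * w x * w y)"
    by (simp add: power2_diff algebra_simps sum.distrib sum_subtractf sum_distrib_left)
  also have "(\<Sum>x\<in>U. \<Sum>y\<in>U. adj E x y * (w y)^2) = (\<Sum>x\<in>U. \<Sum>y\<in>U. adj E x y * (w x)^2)"
    by (subst sum.swap) (simp add: adj_sym[OF sym])
  also have "(\<Sum>x\<in>U. \<Sum>y\<in>U. adj E x y * (w x)^2) = (\<Sum>x\<in>U. real (deg_into E x U) * (w x)^2)"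
    by (simp add: deg_sum[OF U] sum_distrib_right)
  finally show ?thesis unfolding dir_def by simp
qed

lemma dir_nonneg: "dir E U w \<ge> 0"
  unfolding dir_def by (intro divide_nonneg_nonneg sum_nonneg mult_nonneg_nonneg adj_nonneg) auto

lemma dir_killing:
  assumes U: "finite U" and sym: "\<forall>x y. E x y \<longrightarrow> E y x" and Wp: "Wp \<subseteq> U"
    and w0: "\<And>x. x \<in> Wp \<Longrightarrow> w x = 0"
  shows "dir E U w \<ge> (\<Sum>x\<in>U. (\<Sum>y\<in>Wp. adj E x y) * (w x)^2)"
proof -
  let ?t = "\<lambda>x y. adj E x y * (w x - w y)^2"
  have t0: "\<And>x y. ?t x y \<ge> 0" by (simp add: adj_nonneg)
  have finW: "finite Wp" using U Wp finite_subset by blast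
  have split: "(\<Sum>y\<in>U. ?t x y) = (\<Sum>y\<in>Wp. ?t x y) + (\<Sum>y\<in>U - Wp. ?t x y)" for x
    using sum.subset_diff[OF Wp U, of "\<lambda>y. ?t x y"] by (simp add: add.commute)
  have A: "(\<Sum>x\<in>U. \<Sum>y\<in>Wp. ?t x y) = (\<Sum>x\<in>U. (\<Sum>y\<in>Wp. adj E x y) * (w x)^2)"
    by (simp add: w0 sum_distrib_right)
  have "(\<Sum>x\<in>U. \<Sum>y\<in>U - Wp. ?t x y) \<ge> (\<Sum>x\<in>Wp. \<Sum>y\<in>U - Wp. ?t x y)"
    by (rule sum_mono2[OF U Wp]) (auto intro: sum_nonneg t0)
  also have "(\<Sum>x\<in>Wp. \<Sum>y\<in>U - Wp. ?t x y) = (\<Sum>y\<in>U - Wp. \<Sum>x\<in>Wp. ?t x y)"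
    by (rule sum.swap)
  also have "\<dots> = (\<Sum>y\<in>U - Wp. (\<Sum>x\<in>Wp. adj E y x) * (w y)^2)"
    by (simp add: w0 sum_distrib_right adj_sym[OF sym])
  also have "\<dots> = (\<Sum>y\<in>U. (\<Sum>x\<in>Wp. adj E y x) * (w y)^2)"
    using sum.subset_diff[OF Wp U, of "\<lambda>y. (\<Sum>x\<in>Wp. adj E y x) * (w y)^2"] by (simp add: w0)
  finally have B: "(\<Sum>x\<in>U. \<Sum>y\<in>U - Wp. ?t x y) \<ge> (\<Sum>x\<in>U. (\<Sum>y\<in>Wp. adj E x y) * (w x)^2)" .
  have "(\<Sum>x\<in>U. \<Sum>y\<in>U. ?t x y) = (\<Sum>x\<in>U. \<Sum>y\<in>Wp. ?t x y) + (\<Sum>x\<in>U. \<Sum>y\<in>U - Wp. ?t x y)"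
    by (simp add: split sum.distrib)
  thus ?thesis using A B unfolding dir_def by simp
qed

lemma part_bound:
  fixes E :: "nat \<Rightarrow> nat \<Rightarrow> bool" and U Wp :: "nat set" and w :: "nat \<Rightarrow> real"
  assumes U: "finite U" and sym: "\<forall>x y. E x y \<longrightarrow> E y x" and Wp: "Wp \<subseteq> U"
    and w0: "\<And>x. x \<in> Wp \<Longrightarrow> w x = 0"
    and s: "s > 0" and degs: "\<forall>x\<in>U. real (deg_into E x U) \<ge> s"
    and nn: "real (card U) \<le> nn"
    and gap: "spectral_gap E U \<ge> \<gamma>" and gpos: "\<gamma> > 0"
    and mpos: "card Wp > 0"
  shows "dir E U w \<ge> (real (card Wp) / s * \<gamma> / (2 * (real (card Wp) / s) + \<gamma>)) * (s^2 / (2 * nn^2))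
           * (\<Sum>x\<in>U. real (deg_into E x U) * (w x)^2)"
proof -
  define d where "d = (\<lambda>x. real (deg_into E x U))"
  define m where "m = real (card Wp)"
  define L where "L = m / s"
  have mp: "m > 0" using mpos m_def by simp
  have Lp: "L > 0" using mp s L_def by simp
  obtain x1 where x1: "x1 \<in> Wp" using mpos by (metis card.empty card_gt_0_iff ex_in_conv less_irrefl)
  have x1U: "x1 \<in> U" using x1 Wp by auto
  have dpos: "\<forall>x\<in>U. deg_into E x U > 0" using degs s by (metis of_nat_0_less_iff order_less_le_trans)
  have d_le: "d x \<le> nn" if "x \<in> U" for x
  proof -
    have "deg_into E x U \<le> card U" unfolding deg_into_def using U by (intro card_mono) auto
    thus ?thesis using nn d_def by (meson of_nat_le_iff order_trans)
  qed
  have snn: "s \<le> nn" using degs x1U d_le d_def by force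
  define T where "T = (\<Sum>x\<in>U. d x)"
  have Tpos: "T > 0" unfolding T_def using U x1U dpos d_def
    by (intro sum_pos2[of U x1]) auto
  have Tle: "T \<le> nn^2"
  proof -
    have "T \<le> (\<Sum>x\<in>U. nn)" unfolding T_def by (rule sum_mono) (use d_le in auto)
    also have "\<dots> = real (card U) * nn" by simp
    also have "\<dots> \<le> nn * nn" using nn snn s by (intro mult_right_mono) auto
    finally show ?thesis by (simp add: power2_eq_square)
  qed
  define \<mu> where "\<mu> = (\<Sum>x\<in>U. d x * w x) / T"
  define u where "u = (\<lambda>x. w x - \<mu>)"
  define Var where "Var = (\<Sum>x\<in>U. d x * (u x)^2)"
  have Var0: "Var \<ge> 0" unfolding Var_def d_def by (intro sum_nonneg mult_nonneg_nonneg) auto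
  have su: "(\<Sum>x\<in>U. d x * u x) = 0"
  proof -
    have "(\<Sum>x\<in>U. d x * u x) = (\<Sum>x\<in>U. d x * w x) - (\<Sum>x\<in>U. d x) * \<mu>"
      by (simp add: u_def right_diff_distrib sum_subtractf sum_distrib_right)
    thus ?thesis using Tpos unfolding \<mu>_def T_def by simp
  qed
  have VarEq: "(\<Sum>x\<in>U. d x * (w x)^2) = Var + \<mu>^2 * T"
  proof -
    have "(\<Sum>x\<in>U. d x * (w x)^2) = (\<Sum>x\<in>U. d x * (u x)^2 + 2 * \<mu> * (d x * u x) + \<mu>^2 * d x)"
      by (rule sum.cong) (auto simp: u_def power2_eq_square algebra_simps)
    also have "\<dots> = Var + 2 * \<mu> * (\<Sum>x\<in>U. d x * u x) + \<mu>^2 * T"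
      by (simp add: sum.distrib sum_distrib_left Var_def T_def)
    finally show ?thesis using su by simp
  qed
  have dir_u: "dir E U w = dir E U u" unfolding dir_def u_def by simp
  have D1: "dir E U w \<ge> \<gamma> * Var"
  proof -
    have "(\<Sum>x\<in>U. \<Sum>y\<in>U. adj E x y * u x * u y) \<le> (1 - \<gamma>) * Var"
      using poincare_from_gap[OF U dpos sym gap gpos, of u] su unfolding Var_def d_def by simp
    thus ?thesis using dir_eq[OF U sym, of u] dir_u unfolding Var_def d_def by (simp add: algebra_simps)
  qed
  define a where "a = (\<lambda>x. \<Sum>y\<in>Wp. adj E x y)"
  have finW: "finite Wp" using U Wp finite_subset by blast
  have a_le: "a x \<le> L * d x" if "x \<in> U" for x
  proof -
    have "a x \<le> (\<Sum>y\<in>Wp. 1)" unfolding a_def by (rule sum_mono) (simp add: adj_le1)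
    also have "\<dots> = m" using m_def by simp
    also have "m \<le> L * d x" using degs that s mp unfolding L_def d_def
      by (simp add: field_simps)
    finally show ?thesis .
  qed
  have a0: "a x \<ge> 0" for x unfolding a_def by (intro sum_nonneg adj_nonneg)
  have suma: "(\<Sum>x\<in>U. a x) \<ge> m * s"
  proof -
    have "(\<Sum>x\<in>U. a x) = (\<Sum>y\<in>Wp. \<Sum>x\<in>U. adj E y x)"
      unfolding a_def by (subst sum.swap) (simp add: adj_sym[OF sym])
    also have "\<dots> = (\<Sum>y\<in>Wp. d y)" by (simp add: deg_sum[OF U] d_def)
    also have "\<dots> \<ge> (\<Sum>y\<in>Wp. s)" by (rule sum_mono) (use degs Wp d_def in auto)
    moreover have "(\<Sum>y\<in>Wp. s) = m * s" using m_def by simp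
    ultimately show ?thesis using m_def by simp
  qed
  have D2: "dir E U w \<ge> \<mu>^2 / 2 * (m * s) - L * Var"
  proof -
    have "dir E U w \<ge> (\<Sum>x\<in>U. a x * (w x)^2)" using dir_killing[OF U sym Wp w0] a_def by simp
    moreover have "(\<Sum>x\<in>U. a x * (w x)^2) \<ge> (\<Sum>x\<in>U. a x * (\<mu>^2 / 2) - L * (d x * (u x)^2))"
    proof (rule sum_mono)
      fix x assume x: "x \<in> U"
      have sq: "(w x)^2 \<ge> \<mu>^2 / 2 - (u x)^2"
      proof -
        have "0 \<le> (\<mu> + 2 * u x)^2" by simp
        thus ?thesis unfolding u_def by (simp add: power2_eq_square algebra_simps)
      qed
      have "a x * (w x)^2 \<ge> a x * (\<mu>^2 / 2 - (u x)^2)" using sq a0 by (simp add: mult_left_mono)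
      moreover have "a x * (u x)^2 \<le> L * d x * (u x)^2" using a_le[OF x] by (simp add: mult_right_mono)
      ultimately show "a x * (\<mu>^2 / 2) - L * (d x * (u x)^2) \<le> a x * (w x)^2"
        by (simp add: algebra_simps)
    qed
    moreover have "(\<Sum>x\<in>U. a x * (\<mu>^2 / 2) - L * (d x * (u x)^2)) = (\<mu>^2 / 2) * (\<Sum>x\<in>U. a x) - L * Var"
      by (simp add: sum_subtractf sum_distrib_left sum_distrib_right Var_def mult.commute)
    moreover have "(\<mu>^2 / 2) * (\<Sum>x\<in>U. a x) \<ge> \<mu>^2 / 2 * (m * s)" using suma by (simp add: mult_left_mono)
    ultimately show ?thesis by linarith
  qed
  define D where "D = dir E U w"
  have key: "(2 * L + \<gamma>) * D \<ge> L * \<gamma> * (Var + \<mu>^2 * s^2 / 2)"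
  proof -
    have "(2 * L + \<gamma>) * D = 2 * L * D + \<gamma> * D" by (simp add: algebra_simps)
    also have "\<dots> \<ge> 2 * L * (\<gamma> * Var) + \<gamma> * (\<mu>^2 / 2 * (m * s) - L * Var)"
      using D1 D2 Lp gpos unfolding D_def by (intro add_mono mult_left_mono) auto
    moreover have "m * s = L * s^2" using s unfolding L_def by (simp add: power2_eq_square)
    ultimately show ?thesis by (simp add: algebra_simps)
  qed
  define h where "h = L * \<gamma> / (2 * L + \<gamma>)"
  have hpos: "h > 0" using Lp gpos h_def by simp
  have D3: "D \<ge> h * (Var + \<mu>^2 * s^2 / 2)"
    using key Lp gpos unfolding h_def by (simp add: field_simps)
  have "Var + \<mu>^2 * s^2 / 2 \<ge> (s^2 / (2 * nn^2)) * (Var + \<mu>^2 * T)"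
  proof -
    have nnp: "nn > 0" using snn s by simp
    have "s^2 \<le> nn^2" using snn s by (intro power_mono) auto
    hence f1: "s^2 / (2 * nn^2) \<le> 1" using nnp by (simp add: zero_le_power2 order_trans[of _ "nn^2"])
    have "(s^2 / (2 * nn^2)) * Var \<le> Var" by (rule mult_left_le_one_le) (use f1 Var0 in auto)
    moreover have "(s^2 / (2 * nn^2)) * (\<mu>^2 * T) \<le> \<mu>^2 * s^2 / 2"
    proof -
      have "(s^2 / (2 * nn^2)) * (\<mu>^2 * T) = (\<mu>^2 * s^2 / 2) * (T / nn^2)" by (simp add: field_simps)
      also have "\<dots> \<le> (\<mu>^2 * s^2 / 2) * 1" using Tle nnp by (intro mult_left_mono) auto
      finally show ?thesis by simp
    qed
    moreover have "(s^2 / (2 * nn^2)) * (Var + \<mu>^2 * T) = (s^2 / (2 * nn^2)) * Var + (s^2 / (2 * nn^2)) * (\<mu>^2 * T)" by (simp add: distrib_left)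
    ultimately show ?thesis by linarith
  qed
  hence "D \<ge> h * ((s^2 / (2 * nn^2)) * (Var + \<mu>^2 * T))"
    using D3 hpos by (meson mult_left_mono order_trans less_imp_le)
  thus ?thesis unfolding D_def h_def L_def m_def d_def using VarEq d_def by (simp add: mult.assoc)
qed

lemma killed_walk_nonneg: "killed_walk V E W v t x \<ge> 0"
proof (induction t arbitrary: x)
  case 0 thus ?case by simp
next
  case (Suc t)
  have "\<And>u. srw_trans E V u x \<ge> 0" unfolding srw_trans_def by auto
  thus ?case using Suc by (auto intro!: sum_nonneg mult_nonneg_nonneg)
qed

lemma killed_walk_W: "x \<in> W \<Longrightarrow> killed_walk V E W v t x = 0"
  by (cases t) auto

lemma walk_core:
  fixes V W :: "nat set" and E and \<delta> \<eta> :: real and v :: nat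
  assumes G: "simple_graph V E"
    and dmin: "\<forall>x\<in>V. real (deg_into E x V) \<ge> \<delta> * real (card V)"
    and \<delta>: "0 < \<delta>"
    and \<eta>: "0 < \<eta>" "\<eta> \<le> 1/2"
    and dirb: "\<forall>w. (\<forall>x\<in>W. w x = 0) \<longrightarrow> dir E V w \<ge> \<eta> * (\<Sum>x\<in>V. real (deg_into E x V) * (w x)^2)"
    and v: "v \<in> V"
  shows "pW V E W (t+1) v \<le> (1 / (sqrt (1-\<eta>) * \<delta> * sqrt \<delta> * real (card V))) * sqrt (1-\<eta>) ^ t"
proof -
  have finV: "finite V" and sym: "\<forall>x y. E x y \<longrightarrow> E y x" and irr: "\<forall>x. \<not> E x x"
    and EV: "\<forall>x y. E x y \<longrightarrow> x \<in> V \<and> y \<in> V"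
    using G unfolding simple_graph_def by auto
  define n where "n = real (card V)"
  have npos: "n > 0" using finV v n_def card_gt_0_iff by fastforce
  define d where "d = (\<lambda>x. real (deg_into E x V))"
  have dlow: "d x \<ge> \<delta> * n" if "x \<in> V" for x using dmin that d_def n_def by auto
  have dpos: "d x > 0" if "x \<in> V" for x using dlow[OF that] \<delta> npos by (meson mult_pos_pos order_less_le_trans)
  have dup: "d x \<le> n" for x
  proof -
    have "deg_into E x V \<le> card V" unfolding deg_into_def using finV by (intro card_mono) auto
    thus ?thesis unfolding d_def n_def by simp
  qed
  have dsum: "d x = (\<Sum>y\<in>V. adj E x y)" for x using deg_sum[OF finV] d_def by simp
  have adjsym: "adj E x y = adj E y x" for x y using adj_sym[OF sym] .
  define kw where "kw = (\<lambda>t x. killed_walk V E W v t x)"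
  define hh where "hh = (\<lambda>t x. kw t x / d x)"
  have k0: "kw t x \<ge> 0" for t x unfolding kw_def by (rule killed_walk_nonneg)
  have kW: "x \<in> W \<Longrightarrow> kw t x = 0" for t x unfolding kw_def by (rule killed_walk_W)
  have hW: "x \<in> W \<Longrightarrow> hh t x = 0" for t x unfolding hh_def using kW by simp
  have kstep: "kw (Suc t) x = (if x \<in> W then 0 else (\<Sum>u\<in>V. adj E x u * hh t u))" if x: "x \<in> V" for t x
  proof -
    have "(\<Sum>u\<in>V. killed_walk V E W v t u * srw_trans E V u x) = (\<Sum>u\<in>V. adj E x u * hh t u)"
      by (rule sum.cong) (use x sym in \<open>auto simp: srw_trans_def adj_def hh_def kw_def d_def\<close>)
    thus ?thesis unfolding kw_def by simp
  qed
  define Bf where "Bf = (\<lambda>a b. \<Sum>x\<in>V. \<Sum>y\<in>V. adj E x y * a x * b y)"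
  define Nf where "Nf = (\<lambda>a. \<Sum>x\<in>V. d x * (a x)^2)"
  have Nf0: "Nf a \<ge> 0" for a unfolding Nf_def using dpos by (intro sum_nonneg) (simp add: less_imp_le)
  have R: "Bf w w \<le> (1-\<eta>) * Nf w" if "\<forall>x\<in>W. w x = 0" for w
    using dirb that dir_eq[OF finV sym, of w] unfolding Bf_def Nf_def d_def by (auto simp: algebra_simps)
  have Rabs: "- Bf w w \<le> (1-\<eta>) * Nf w" if w: "\<forall>x\<in>W. w x = 0" for w
  proof -
    have "- Bf w w \<le> Bf (\<lambda>x. \<bar>w x\<bar>) (\<lambda>x. \<bar>w x\<bar>)"
      unfolding Bf_def
    proof -
      have "- (\<Sum>x\<in>V. \<Sum>y\<in>V. adj E x y * w x * w y) = (\<Sum>x\<in>V. \<Sum>y\<in>V. - (adj E x y * w x * w y))"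
        by (simp add: sum_negf)
      also have "\<dots> \<le> (\<Sum>x\<in>V. \<Sum>y\<in>V. adj E x y * \<bar>w x\<bar> * \<bar>w y\<bar>)"
      proof (intro sum_mono)
        fix x y
        have "- (w x * w y) \<le> \<bar>w x\<bar> * \<bar>w y\<bar>" by (simp add: abs_mult[symmetric] abs_le_iff)
        thus "- (adj E x y * w x * w y) \<le> adj E x y * \<bar>w x\<bar> * \<bar>w y\<bar>"
          using adj_nonneg[of E x y] by (metis minus_mult_right mult.assoc mult_left_mono)
      qed
      finally show "- (\<Sum>x\<in>V. \<Sum>y\<in>V. adj E x y * w x * w y) \<le> (\<Sum>x\<in>V. \<Sum>y\<in>V. adj E x y * \<bar>w x\<bar> * \<bar>w y\<bar>)" .
    qed
    also have "\<dots> \<le> (1-\<eta>) * Nf (\<lambda>x. \<bar>w x\<bar>)" by (rule R) (use w in auto)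
    also have "Nf (\<lambda>x. \<bar>w x\<bar>) = Nf w" unfolding Nf_def by simp
    finally show ?thesis .
  qed
  have contract: "Nf (hh (Suc t)) \<le> (1-\<eta>) * Nf (hh t)" for t
  proof -
    define g where "g = hh (Suc t)"
    define f where "f = hh t"
    have gW: "\<forall>x\<in>W. g x = 0" and fW: "\<forall>x\<in>W. f x = 0" using hW g_def f_def by auto
    have NB: "Nf g = Bf g f"
    proof -
      have "Nf g = (\<Sum>x\<in>V. g x * (\<Sum>y\<in>V. adj E x y * f y))"
        unfolding Nf_def
      proof (rule sum.cong[OF refl])
        fix x assume x: "x \<in> V"
        show "d x * (g x)^2 = g x * (\<Sum>y\<in>V. adj E x y * f y)"
        proof (cases "x \<in> W")
          case True thus ?thesis using gW by simp
        next
          case False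
          have "kw (Suc t) x = (\<Sum>y\<in>V. adj E x y * f y)" using kstep[OF x] False f_def by simp
          moreover have "g x = kw (Suc t) x / d x" using g_def hh_def by simp
          ultimately show ?thesis using dpos[OF x] by (simp add: power2_eq_square)
        qed
      qed
      also have "\<dots> = Bf g f" unfolding Bf_def by (simp add: sum_distrib_left mult.assoc mult.left_commute)
      finally show ?thesis .
    qed
    have BB: "Bf f g = Bf g f" unfolding Bf_def
      by (subst sum.swap) (simp add: adjsym mult.commute mult.left_commute)
    have polar: "Bf (\<lambda>x. g x + f x) (\<lambda>x. g x + f x) - Bf (\<lambda>x. g x - f x) (\<lambda>x. g x - f x) = 4 * Bf g f"
    proof -
      have "Bf (\<lambda>x. g x + f x) (\<lambda>x. g x + f x) - Bf (\<lambda>x. g x - f x) (\<lambda>x. g x - f x)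
          = (\<Sum>x\<in>V. \<Sum>y\<in>V. 2 * (adj E x y * g x * f y) + 2 * (adj E x y * f x * g y))"
        unfolding Bf_def by (simp add: sum_subtractf[symmetric] algebra_simps)
      also have "\<dots> = 2 * Bf g f + 2 * Bf f g" unfolding Bf_def
        by (simp add: sum.distrib sum_distrib_left)
      finally show ?thesis using BB by simp
    qed
    have NN: "Nf (\<lambda>x. g x + f x) + Nf (\<lambda>x. g x - f x) = 2 * Nf g + 2 * Nf f"
      unfolding Nf_def by (simp add: sum.distrib[symmetric] sum_distrib_left algebra_simps power2_eq_square)
    have A1: "Bf (\<lambda>x. g x + f x) (\<lambda>x. g x + f x) \<le> (1-\<eta>) * Nf (\<lambda>x. g x + f x)"
      by (rule R) (use gW fW in auto)
    have A2: "- Bf (\<lambda>x. g x - f x) (\<lambda>x. g x - f x) \<le> (1-\<eta>) * Nf (\<lambda>x. g x - f x)"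
      by (rule Rabs) (use gW fW in auto)
    have A3: "(1-\<eta>) * Nf (\<lambda>x. g x + f x) + (1-\<eta>) * Nf (\<lambda>x. g x - f x) = (1-\<eta>) * (2 * Nf g + 2 * Nf f)"
      using NN by (metis distrib_left)
    define X where "X = \<eta> * Nf g"
    have X0: "X \<ge> 0" unfolding X_def using \<eta> Nf0[of g] by simp
    have A4: "(1-\<eta>) * (2 * Nf g + 2 * Nf f) = 2 * Nf g - 2 * X + 2 * ((1-\<eta>) * Nf f)"
      unfolding X_def by (simp add: algebra_simps)
    have "4 * Nf g \<le> 2 * Nf g - 2 * X + 2 * ((1-\<eta>) * Nf f)"
      using A1 A2 A3 A4 polar NB by linarith
    hence "Nf g \<le> (1-\<eta>) * Nf f" using X0 by linarith
    thus ?thesis unfolding g_def f_def .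
  qed
  have iter: "Nf (hh (Suc t)) \<le> (1-\<eta>)^t * Nf (hh 1)" for t
  proof (induction t)
    case 0 thus ?case by simp
  next
    case (Suc t)
    have "Nf (hh (Suc (Suc t))) \<le> (1-\<eta>) * Nf (hh (Suc t))" by (rule contract)
    also have "\<dots> \<le> (1-\<eta>) * ((1-\<eta>)^t * Nf (hh 1))" using Suc \<eta> by (intro mult_left_mono) auto
    finally show ?case by simp
  qed
  have h0: "hh 0 u = (if u = v \<and> v \<notin> W then 1 / d v else 0)" for u
    unfolding hh_def kw_def by auto
  have sum_h0: "(\<Sum>u\<in>V. adj E x u * hh 0 u) = adj E x v * hh 0 v" for x
    using v finV by (subst sum.remove[of V v]) (auto simp: h0 intro!: sum.neutral)
  have k1: "kw 1 x \<le> adj E x v / d v" if x: "x \<in> V" for x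
  proof -
    have "kw 1 x \<le> adj E x v * hh 0 v" using kstep[OF x, of 0] sum_h0 adj_nonneg[of E x v] h0 dpos[OF v]
      by (auto simp: less_imp_le)
    also have "\<dots> \<le> adj E x v / d v" using h0 adj_nonneg[of E x v] dpos[OF v] by auto
    finally show ?thesis .
  qed
  have init: "Nf (hh 1) \<le> 1 / (\<delta> * n)^2"
  proof -
    have "Nf (hh 1) = (\<Sum>x\<in>V. (kw 1 x)^2 / d x)"
      unfolding Nf_def hh_def by (rule sum.cong) (use dpos in \<open>auto simp: power2_eq_square\<close>)
    also have "\<dots> \<le> (\<Sum>x\<in>V. adj E x v / (d v)^2 / (\<delta> * n))"
    proof (rule sum_mono)
      fix x assume x: "x \<in> V"
      have "(kw 1 x)^2 \<le> (adj E x v / d v)^2" using k1[OF x] k0 by (intro power_mono) auto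
      also have "\<dots> = adj E x v / (d v)^2" by (simp add: adj_def power_divide)
      finally have a: "(kw 1 x)^2 \<le> adj E x v / (d v)^2" .
      have "(kw 1 x)^2 / d x \<le> (kw 1 x)^2 / (\<delta> * n)"
        using dlow[OF x] dpos[OF x] \<delta> npos by (intro divide_left_mono) auto
      also have "\<dots> \<le> adj E x v / (d v)^2 / (\<delta> * n)" using a \<delta> npos by (intro divide_right_mono) auto
      finally show "(kw 1 x)^2 / d x \<le> adj E x v / (d v)^2 / (\<delta> * n)" .
    qed
    also have "\<dots> = d v / (d v)^2 / (\<delta> * n)"
      by (simp add: sum_divide_distrib[symmetric] dsum adjsym)
    also have "\<dots> = 1 / (d v * (\<delta> * n))" using dpos[OF v] by (simp add: power2_eq_square)
    also have "\<dots> \<le> 1 / ((\<delta> * n) * (\<delta> * n))"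
      using dlow[OF v] dpos[OF v] \<delta> npos by (intro divide_left_mono mult_right_mono mult_pos_pos) auto
    finally show ?thesis by (simp add: power2_eq_square)
  qed
  have final_sq: "(kw (Suc s) v)^2 \<le> Nf (hh s) / \<delta>" for s
  proof (cases "v \<in> W")
    case True thus ?thesis using kW Nf0 \<delta> by simp
  next
    case False
    have "kw (Suc s) v = (\<Sum>u\<in>V. (sqrt (d u) * hh s u) * (adj E v u / sqrt (d u)))"
    proof -
      have "kw (Suc s) v = (\<Sum>u\<in>V. adj E v u * hh s u)" using kstep[OF v, of s] False by simp
      also have "\<dots> = (\<Sum>u\<in>V. (sqrt (d u) * hh s u) * (adj E v u / sqrt (d u)))"
      proof (rule sum.cong[OF refl])
        fix u assume "u \<in> V"
        hence "sqrt (d u) > 0" using dpos by simp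
        thus "adj E v u * hh s u = (sqrt (d u) * hh s u) * (adj E v u / sqrt (d u))" by (simp add: field_simps)
      qed
      finally show ?thesis .
    qed
    hence "(kw (Suc s) v)^2 \<le> (\<Sum>u\<in>V. (sqrt (d u) * hh s u)^2) * (\<Sum>u\<in>V. (adj E v u / sqrt (d u))^2)"
      using Cauchy_Schwarz_ineq_sum by metis
    also have "(\<Sum>u\<in>V. (sqrt (d u) * hh s u)^2) = Nf (hh s)"
      unfolding Nf_def by (rule sum.cong) (use dpos in \<open>auto simp: power_mult_distrib less_imp_le\<close>)
    also have "(\<Sum>u\<in>V. (adj E v u / sqrt (d u))^2) \<le> 1 / \<delta>"
    proof -
      have "(\<Sum>u\<in>V. (adj E v u / sqrt (d u))^2) = (\<Sum>u\<in>V. adj E v u / d u)"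
        by (rule sum.cong) (use dpos in \<open>auto simp: power_divide adj_def less_imp_le\<close>)
      also have "\<dots> \<le> (\<Sum>u\<in>V. adj E v u / (\<delta> * n))"
        by (rule sum_mono) (use dlow dpos \<delta> npos adj_nonneg in \<open>auto intro!: divide_left_mono\<close>)
      also have "\<dots> = d v / (\<delta> * n)" by (simp add: sum_divide_distrib[symmetric] dsum)
      also have "\<dots> \<le> n / (\<delta> * n)" using dup \<delta> npos by (intro divide_right_mono) auto
      also have "\<dots> = 1 / \<delta>" using npos by simp
      finally show ?thesis .
    qed
    hence "Nf (hh s) * (\<Sum>u\<in>V. (adj E v u / sqrt (d u))^2) \<le> Nf (hh s) * (1 / \<delta>)"
      using Nf0 by (intro mult_left_mono) auto
    finally show ?thesis by simp
  qed
  define r where "r = sqrt (1 - \<eta>)"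
  have r: "r > 0" "r^2 = 1 - \<eta>" using \<eta> r_def by auto
  define Bc where "Bc = 1 / (r * \<delta> * sqrt \<delta> * n)"
  have Bc0: "Bc \<ge> 0" using r \<delta> npos Bc_def by simp
  have "kw (t + 1) v \<le> Bc * r ^ t"
  proof (cases t)
    case 0
    have "kw 1 v = 0" using kstep[OF v, of 0] sum_h0 irr by (simp add: adj_def)
    thus ?thesis using 0 Bc0 by simp
  next
    case (Suc t')
    have X0: "Bc * r ^ t \<ge> 0" using Bc0 r by simp
    have "(kw (t + 1) v)^2 \<le> Nf (hh (Suc t')) / \<delta>" using final_sq[of "Suc t'"] Suc by simp
    also have "\<dots> \<le> ((1-\<eta>)^t' * (1 / (\<delta> * n)^2)) / \<delta>"
      using iter[of t'] init \<eta> \<delta> by (intro divide_right_mono order_trans[OF iter] mult_left_mono) auto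
    also have "\<dots> = (Bc * r ^ t)^2"
    proof -
      have "(Bc * r ^ t)^2 = (r^2)^t' / (\<delta>^2 * (sqrt \<delta>)^2 * n^2)"
        using r Suc unfolding Bc_def by (simp add: power_mult_distrib power_divide field_simps power_mult[symmetric] mult.commute)
      also have "\<dots> = (1-\<eta>)^t' / (\<delta>^3 * n^2)" using r \<delta> by (simp add: power3_eq_cube power2_eq_square)
      finally show ?thesis by (simp add: field_simps power2_eq_square power3_eq_cube)
    qed
    finally show ?thesis using X0 k0 by (meson power2_le_imp_le)
  qed
  thus ?thesis unfolding pW_def kw_def Bc_def r_def n_def by simp
qed

lemma glob_dir:
  fixes k :: nat
  assumes finV: "finite V"
    and parts: "(\<Union>i<k. Vs i) = V" and disj: "\<forall>i<k. \<forall>j<k. i \<noteq> j \<longrightarrow> Vs i \<inter> Vs j = {}"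
    and per: "\<forall>i<k. dir E (Vs i) w \<ge> c * (\<Sum>x\<in>Vs i. real (deg_into E x (Vs i)) * (w x)^2)"
    and ratio: "\<forall>i<k. \<forall>x\<in>Vs i. real (deg_into E x (Vs i)) \<ge> q * real (deg_into E x V)"
    and c: "c \<ge> 0" and q: "q \<ge> 0"
  shows "dir E V w \<ge> c * q * (\<Sum>x\<in>V. real (deg_into E x V) * (w x)^2)"
proof -
  let ?t = "\<lambda>p. adj E (fst p) (snd p) * (w (fst p) - w (snd p))^2"
  have fin: "\<And>i. i < k \<Longrightarrow> finite (Vs i)" using parts finV by (metis UN_I finite_subset lessThan_iff subsetI)
  have dirp: "dir E U w = (\<Sum>p\<in>U \<times> U. ?t p) / 2" for U
    unfolding dir_def sum.cartesian_product by (simp add: case_prod_unfold)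
  have "(\<Sum>i<k. dir E (Vs i) w) = (\<Sum>i<k. \<Sum>p\<in>Vs i \<times> Vs i. ?t p) / 2"
    by (simp add: dirp sum_divide_distrib)
  also have "(\<Sum>i<k. \<Sum>p\<in>Vs i \<times> Vs i. ?t p) = (\<Sum>p\<in>(\<Union>i<k. Vs i \<times> Vs i). ?t p)"
    by (rule sum.UNION_disjoint[symmetric]) (use fin disj in auto)
  also have "\<dots> \<le> (\<Sum>p\<in>V \<times> V. ?t p)"
    by (rule sum_mono2) (use finV parts in \<open>auto intro!: mult_nonneg_nonneg adj_nonneg\<close>)
  finally have A: "(\<Sum>i<k. dir E (Vs i) w) \<le> dir E V w" by (simp add: dirp divide_right_mono)
  have "(\<Sum>i<k. dir E (Vs i) w) \<ge> (\<Sum>i<k. c * (\<Sum>x\<in>Vs i. real (deg_into E x (Vs i)) * (w x)^2))"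
    by (rule sum_mono) (use per in auto)
  moreover have "(\<Sum>i<k. c * (\<Sum>x\<in>Vs i. real (deg_into E x (Vs i)) * (w x)^2))
      \<ge> (\<Sum>i<k. c * (\<Sum>x\<in>Vs i. q * real (deg_into E x V) * (w x)^2))"
    by (intro sum_mono mult_left_mono c mult_right_mono) (use ratio in auto)
  moreover have "(\<Sum>i<k. c * (\<Sum>x\<in>Vs i. q * real (deg_into E x V) * (w x)^2))
      = c * q * (\<Sum>x\<in>V. real (deg_into E x V) * (w x)^2)"
  proof -
    have U: "(\<Sum>i<k. \<Sum>x\<in>Vs i. real (deg_into E x V) * (w x)^2) = (\<Sum>x\<in>V. real (deg_into E x V) * (w x)^2)"
      unfolding parts[symmetric] by (rule sum.UNION_disjoint[symmetric]) (use fin disj in auto)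
    have "(\<Sum>i<k. c * (\<Sum>x\<in>Vs i. q * real (deg_into E x V) * (w x)^2))
      = c * q * (\<Sum>i<k. \<Sum>x\<in>Vs i. real (deg_into E x V) * (w x)^2)"
      by (simp add: sum_distrib_left mult.assoc)
    also have "\<dots> = c * q * (\<Sum>x\<in>V. real (deg_into E x V) * (w x)^2)" by (simp only: U)
    finally show ?thesis .
  qed
  ultimately show ?thesis using A by linarith
qed

lemma series_bound:
  fixes a :: "nat \<Rightarrow> real"
  assumes r: "0 < r" "r < 1" and B: "B \<ge> 0"
    and a: "\<And>t. 0 \<le> a t" "\<And>t. a t \<le> B * r ^ t"
  shows "summable (\<lambda>t. real (t + 2) * a t) \<and> (\<Sum>t. real (t + 2) * a t) \<le> B * (1 / (1 - r)^2 + 1 / (1 - r))"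
proof -
  define g where "g = (\<lambda>t. B * (of_nat (Suc t) * r ^ t + r ^ t))"
  have "(\<lambda>t. of_nat (Suc t) * r ^ t) sums (1 / (1 - r)^2)"
    using geometric_deriv_sums[of r] r by simp
  moreover have "(\<lambda>t. r ^ t) sums (1 / (1 - r))" using geometric_sums[of r] r by simp
  ultimately have gs: "g sums (B * (1 / (1 - r)^2 + 1 / (1 - r)))"
    unfolding g_def by (intro sums_mult sums_add)
  have le: "norm (real (t + 2) * a t) \<le> g t" for t
  proof -
    have "norm (real (t + 2) * a t) = real (t + 2) * a t" using a(1)[of t] by simp
    also have "\<dots> \<le> real (t + 2) * (B * r ^ t)" using a(2)[of t] by (intro mult_left_mono) auto
    also have "\<dots> = g t" unfolding g_def by (simp add: algebra_simps)
    finally show ?thesis .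
  qed
  have sm: "summable (\<lambda>t. real (t + 2) * a t)"
    by (rule summable_comparison_test[OF _ sums_summable[OF gs]]) (use le in auto)
  have "(\<Sum>t. real (t + 2) * a t) \<le> (\<Sum>t. g t)"
    by (rule suminf_le) (use le a(1) sm sums_summable[OF gs] in \<open>auto intro: order_trans[OF abs_ge_self]\<close>)
  also have "\<dots> = B * (1 / (1 - r)^2 + 1 / (1 - r))" using gs sums_unique by metis
  finally show ?thesis using sm by simp
qed

lemma hl_bound:
  fixes a1 a2 R L \<gamma> :: real
  assumes "a1 > 0" "a2 > 0" "R > 0" "\<gamma> \<ge> a1 / R" "L \<ge> a2 / R"
  shows "L * \<gamma> / (2 * L + \<gamma>) \<ge> a1 * a2 / ((2 * a2 + a1) * R)"
proof -
  have gp: "\<gamma> > 0" and Lp: "L > 0" using assms by (auto intro: order_less_le_trans[rotated])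
  have e1: "L * \<gamma> / (2 * L + \<gamma>) = 1 / (2 / \<gamma> + 1 / L)" using gp Lp by (simp add: field_simps)
  have "2 / \<gamma> \<le> 2 * R / a1" using assms gp by (simp add: field_simps)
  moreover have "1 / L \<le> R / a2" using assms Lp by (simp add: field_simps)
  moreover have "R * (2 * a2 + a1) / (a1 * a2) = 2 * R / a1 + R / a2" using assms by (simp add: field_simps)
  ultimately have "2 / \<gamma> + 1 / L \<le> R * (2 * a2 + a1) / (a1 * a2)" by linarith
  hence "1 / (2 / \<gamma> + 1 / L) \<ge> 1 / (R * (2 * a2 + a1) / (a1 * a2))"
    using gp Lp assms by (intro divide_left_mono mult_pos_pos) (auto intro: add_pos_pos)
  thus ?thesis using e1 by (simp add: mult.commute)
qed

lemma powr_15: "(n::real) > 0 \<Longrightarrow> n powr 1.5 = n * sqrt n"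
proof -
  assume n: "n > 0"
  have "n powr 1.5 = n powr (1 + 1/2)" by simp
  also have "\<dots> = n * sqrt n" using n by (subst powr_add) (simp add: powr_half_sqrt)
  finally show ?thesis .
qed

lemma final_arith:
  fixes \<eta> D :: real
  assumes \<eta>: "0 < \<eta>" "\<eta> \<le> 1/2" and D: "D > 0"
  shows "1 / (sqrt (1-\<eta>) * D) * (1 / (1 - sqrt (1-\<eta>))^2 + 1 / (1 - sqrt (1-\<eta>))) \<le> 16 / (D * \<eta>^2)"
proof -
  define r where "r = sqrt (1 - \<eta>)"
  have r0: "r \<ge> 0" and r2: "r^2 = 1 - \<eta>" using \<eta> r_def by auto
  have rhalf: "r \<ge> 1/2"
  proof (rule ccontr)
    assume "\<not> r \<ge> 1/2"
    hence "r^2 \<le> (1/2)^2" using r0 by (intro power_mono) auto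
    thus False using r2 \<eta> by (simp add: power2_eq_square)
  qed
  have rle: "r \<le> 1 - \<eta>/2"
  proof -
    have e: "(1 - \<eta>/2)^2 = 1 - \<eta> + \<eta>^2/4" by (simp add: power2_eq_square field_simps)
    have "r^2 \<le> (1 - \<eta>/2)^2" unfolding e r2 using zero_le_power2[of \<eta>] by linarith
    moreover have "0 \<le> 1 - \<eta>/2" using \<eta> by linarith
    ultimately show ?thesis by (rule power2_le_imp_le)
  qed
  have q: "1 - r \<ge> \<eta>/2" using rle by simp
  have qp: "1 - r > 0" using q \<eta> by simp
  have i1: "1 / (1 - r) \<le> 2 / \<eta>"
  proof -
    have "1 / (1 - r) \<le> 1 / (\<eta>/2)" by (rule divide_left_mono) (use q qp \<eta> in auto)
    thus ?thesis by simp
  qed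
  have i2: "1 / (1 - r)^2 \<le> 4 / \<eta>^2"
  proof -
    have "(\<eta>/2)^2 \<le> (1 - r)^2" using q \<eta> by (intro power_mono) auto
    hence "1 / (1 - r)^2 \<le> 1 / (\<eta>/2)^2" by (intro divide_left_mono) (use qp \<eta> in auto)
    thus ?thesis by (simp add: power_divide)
  qed
  have i3: "2 / \<eta> \<le> 4 / \<eta>^2"
  proof -
    have "2 / \<eta> = (2 * \<eta>) / \<eta>^2" using \<eta> by (simp add: power2_eq_square)
    also have "\<dots> \<le> 4 / \<eta>^2" using \<eta> by (intro divide_right_mono) auto
    finally show ?thesis .
  qed
  have br: "1 / (1 - r)^2 + 1 / (1 - r) \<le> 8 / \<eta>^2" using i1 i2 i3 by simp
  have bc: "1 / (r * D) \<le> 2 / D"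
  proof -
    have "1 / (r * D) \<le> 1 / ((1/2) * D)" by (rule divide_left_mono) (use rhalf D in auto)
    thus ?thesis by simp
  qed
  have "1 / (r * D) * (1 / (1 - r)^2 + 1 / (1 - r)) \<le> (2 / D) * (8 / \<eta>^2)"
    using br bc rhalf D qp by (intro mult_mono) auto
  also have "\<dots> = 16 / (D * \<eta>^2)" by simp
  finally show ?thesis unfolding r_def .
qed

definition c0f :: "real \<Rightarrow> real \<Rightarrow> real" where
  "c0f \<delta> \<epsilon> = \<epsilon> powr (11 * 2 powr (2 / \<delta>)) *
     ((\<delta>^15 / 2^31) * (40 * \<epsilon>^8 / \<delta>^4) / (2 * (40 * \<epsilon>^8 / \<delta>^4) + \<delta>^15 / 2^31)) * \<delta>^12 / 128000"

definition Cf :: "real \<Rightarrow> real \<Rightarrow> real" where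
  "Cf \<delta> \<epsilon> = 16 / (\<delta> * sqrt \<delta> * (min (c0f \<delta> \<epsilon>) (1/2))^2)"

lemma main_fixed:
  fixes \<delta> \<epsilon> \<theta> :: real and V :: "nat set" and E and k :: nat and Vs :: "nat \<Rightarrow> nat set" and W :: "nat set"
  assumes \<delta>: "0 < \<delta>" "\<delta> \<le> 1" and \<epsilon>: "0 < \<epsilon>"
    and G: "simple_graph V E"
    and mindeg: "\<forall>v\<in>V. real (deg_into E v V) \<ge> \<delta> * real (card V)"
    and GD: "good_decomposition V E \<epsilon> \<delta> (real (card V) powr 1.5) \<theta> k Vs"
    and WV: "W \<subseteq> V"
    and Wc: "\<forall>i<k. real (card (W \<inter> Vs i)) \<ge> \<epsilon>^8 * \<theta> * sqrt (real (card V))"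
  shows "summable (\<lambda>t. real (t + 2) * Max ((\<lambda>v. pW V E W (t + 1) v) ` V)) \<and>
         (\<Sum>t. real (t + 2) * Max ((\<lambda>v. pW V E W (t + 1) v) ` V)) \<le> Cf \<delta> \<epsilon>"
proof -
  have finV: "finite V" and Vne: "V \<noteq> {}" and sym: "\<forall>x y. E x y \<longrightarrow> E y x"
    using G unfolding simple_graph_def by auto
  define n where "n = real (card V)"
  have n1: "n \<ge> 1" unfolding n_def using finV Vne by (simp add: Suc_leI card_gt_0_iff)
  define R where "R = sqrt n"
  have R1: "R \<ge> 1" unfolding R_def using n1 by simp
  have R2: "R^2 = n" unfolding R_def using n1 by simp
  have Rn: "R * R = n" using R2 by (simp add: power2_eq_square)
  define \<theta>0 where "\<theta>0 = \<epsilon> powr (11 * 2 powr (2 / \<delta>))"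
  have \<theta>0p: "\<theta>0 > 0" unfolding \<theta>0_def using \<epsilon> by simp
  have parts: "(\<Union>i<k. Vs i) = V" and disj: "\<forall>i<k. \<forall>j<k. i \<noteq> j \<longrightarrow> Vs i \<inter> Vs j = {}"
    and th: "\<theta>0 \<le> \<theta>"
    and per: "\<forall>i<k. real (card (Vs i)) \<ge> \<delta> * n / 2 \<and>
         spectral_gap E (Vs i) \<ge> \<delta>^15 * \<theta> * (n powr 1.5) / (2^31 * n^2) \<and>
         (\<forall>v\<in>Vs i. real (deg_into E v (Vs i)) \<ge> \<delta>^4 * n / 40) \<and>
         real (edges_between E (Vs i) (V - Vs i)) \<le> \<epsilon>^9 * \<theta>^2 * (n powr 1.5)"
    using GD unfolding good_decomposition_def Let_def n_def \<theta>0_def by auto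
  have \<theta>p: "\<theta> > 0" using th \<theta>0p by simp
  define b1 where "b1 = \<delta>^15 / 2^31"
  define b2 where "b2 = 40 * \<epsilon>^8 / \<delta>^4"
  define bb where "bb = b1 * b2 / (2 * b2 + b1)"
  have b1p: "b1 > 0" unfolding b1_def using \<delta> by (intro divide_pos_pos zero_less_power) auto
  have b2p: "b2 > 0" unfolding b2_def using \<delta> \<epsilon> by (intro divide_pos_pos mult_pos_pos zero_less_power) auto
  have bbp: "bb > 0" unfolding bb_def using b1p b2p by (intro divide_pos_pos mult_pos_pos add_pos_pos) auto
  define c0 where "c0 = \<theta>0 * bb * \<delta>^12 / 128000"
  have c0eq: "c0 = c0f \<delta> \<epsilon>" unfolding c0_def c0f_def \<theta>0_def bb_def b1_def b2_def by simp
  have c0p: "c0 > 0" unfolding c0_def using \<theta>0p bbp \<delta> by (intro divide_pos_pos mult_pos_pos zero_less_power) auto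
  define S where "S = (\<lambda>U w. \<Sum>x\<in>U. real (deg_into E x U) * (w x)^2)"
  have S0: "S U w \<ge> 0" for U w unfolding S_def by (intro sum_nonneg mult_nonneg_nonneg) auto
  have partb: "dir E (Vs i) w \<ge> (\<theta>0 * bb / R * (\<delta>^8 / 3200)) * S (Vs i) w"
    if i: "i < k" and w: "\<forall>x\<in>W. w x = 0" for i w
  proof -
    define U where "U = Vs i"
    have UV: "U \<subseteq> V" unfolding U_def using parts i by auto
    have finU: "finite U" using UV finV finite_subset by blast
    define s where "s = \<delta>^4 * n / 40"
    have sp: "s > 0" unfolding s_def using \<delta> n1 by (intro divide_pos_pos mult_pos_pos zero_less_power) auto
    have degs: "\<forall>x\<in>U. real (deg_into E x U) \<ge> s" unfolding U_def s_def using per i by blast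
    have nn: "real (card U) \<le> n" unfolding n_def using card_mono[OF finV UV] by simp
    define \<gamma> where "\<gamma> = \<delta>^15 * \<theta> * (n powr 1.5) / (2^31 * n^2)"
    have gap: "spectral_gap E U \<ge> \<gamma>" unfolding U_def \<gamma>_def using per i by blast
    have \<gamma>eq: "\<gamma> = (\<theta> * b1) / R"
    proof -
      have "n powr 1.5 = n * R" unfolding R_def using powr_15[of n] n1 by simp
      hence "\<gamma> = \<delta>^15 * \<theta> * (n * R) / (2^31 * (R * R)^2)" unfolding \<gamma>_def using Rn by simp
      also have "\<dots> = (\<theta> * b1) / R" unfolding b1_def using R1 by (simp add: Rn[symmetric] field_simps power2_eq_square)
      finally show ?thesis .
    qed
    have gpos: "\<gamma> > 0" unfolding \<gamma>eq using \<theta>p b1p R1 by (intro divide_pos_pos mult_pos_pos) auto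
    define Wp where "Wp = W \<inter> U"
    have WpU: "Wp \<subseteq> U" unfolding Wp_def by auto
    have w0: "\<And>x. x \<in> Wp \<Longrightarrow> w x = 0" unfolding Wp_def using w by auto
    have mge: "real (card Wp) \<ge> \<epsilon>^8 * \<theta> * R" unfolding Wp_def U_def R_def n_def using Wc i by blast
    have mpos: "card Wp > 0"
    proof -
      have "\<epsilon>^8 * \<theta> * R > 0" using \<epsilon> \<theta>p R1 by simp
      thus ?thesis using mge by linarith
    qed
    define L where "L = real (card Wp) / s"
    have Lge: "L \<ge> (\<theta> * b2) / R"
    proof -
      have "L \<ge> \<epsilon>^8 * \<theta> * R / s" unfolding L_def using mge sp by (intro divide_right_mono) auto
      also have "\<epsilon>^8 * \<theta> * R / s = (\<theta> * b2) / R"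
        unfolding s_def b2_def using \<delta> R1 Rn[symmetric] by (simp add: field_simps)
      finally show ?thesis .
    qed
    have PB: "dir E U w \<ge> (L * \<gamma> / (2 * L + \<gamma>)) * (s^2 / (2 * n^2)) * S U w"
      using part_bound[OF finU sym WpU w0 sp degs nn gap gpos mpos] unfolding L_def S_def by simp
    have hl: "L * \<gamma> / (2 * L + \<gamma>) \<ge> (\<theta> * b1) * (\<theta> * b2) / ((2 * (\<theta> * b2) + \<theta> * b1) * R)"
      by (rule hl_bound) (use \<theta>p b1p b2p R1 Lge \<gamma>eq in auto)
    have "(\<theta> * b1) * (\<theta> * b2) / ((2 * (\<theta> * b2) + \<theta> * b1) * R) = (\<theta> * (\<theta> * b1 * b2)) / (\<theta> * ((2 * b2 + b1) * R))"
      by (rule arg_cong2[where f="(/)"]) (simp_all add: algebra_simps)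
    also have "\<dots> = \<theta> * b1 * b2 / ((2 * b2 + b1) * R)"
      using \<theta>p by (intro nonzero_mult_divide_mult_cancel_left) auto
    also have "\<dots> = \<theta> * bb / R"
      unfolding bb_def using b1p b2p R1 by (simp add: field_simps)
    finally have "(\<theta> * b1) * (\<theta> * b2) / ((2 * (\<theta> * b2) + \<theta> * b1) * R) = \<theta> * bb / R" .
    also have "\<dots> \<ge> \<theta>0 * bb / R" using th bbp R1 by (intro divide_right_mono mult_right_mono) auto
    finally have hl2: "L * \<gamma> / (2 * L + \<gamma>) \<ge> \<theta>0 * bb / R" using hl by linarith
    have ss: "s^2 / (2 * n^2) = \<delta>^8 / 3200" unfolding s_def using n1 by (simp add: field_simps power2_eq_square)
    have "(\<theta>0 * bb / R * (\<delta>^8 / 3200)) * S U w \<le> (L * \<gamma> / (2 * L + \<gamma>)) * (\<delta>^8 / 3200) * S U w"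
      using hl2 S0[of U w] \<delta> by (intro mult_right_mono) auto
    thus ?thesis using PB ss unfolding U_def by simp
  qed
  define \<eta> where "\<eta> = min c0 (1/2) / R"
  have \<eta>p: "\<eta> > 0" unfolding \<eta>_def using c0p R1 by (intro divide_pos_pos) auto
  have \<eta>half: "\<eta> \<le> 1/2"
  proof -
    have "min c0 (1/2) / R \<le> min c0 (1/2) / 1" using R1 c0p by (intro divide_left_mono) auto
    thus ?thesis unfolding \<eta>_def by simp
  qed
  have dirb: "\<forall>w. (\<forall>x\<in>W. w x = 0) \<longrightarrow> dir E V w \<ge> \<eta> * (\<Sum>x\<in>V. real (deg_into E x V) * (w x)^2)"
  proof (intro allI impI)
    fix w :: "nat \<Rightarrow> real" assume w: "\<forall>x\<in>W. w x = 0"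
    have ratio: "\<forall>i<k. \<forall>x\<in>Vs i. real (deg_into E x (Vs i)) \<ge> (\<delta>^4 / 40) * real (deg_into E x V)"
    proof (intro allI impI ballI)
      fix i x assume i: "i < k" and x: "x \<in> Vs i"
      have "deg_into E x V \<le> card V" unfolding deg_into_def using finV by (intro card_mono) auto
      hence "(\<delta>^4 / 40) * real (deg_into E x V) \<le> (\<delta>^4 / 40) * n" unfolding n_def using \<delta> by (intro mult_left_mono) auto
      also have "\<dots> \<le> real (deg_into E x (Vs i))" using per i x by auto
      finally show "real (deg_into E x (Vs i)) \<ge> (\<delta>^4 / 40) * real (deg_into E x V)" .
    qed
    have G1: "dir E V w \<ge> (\<theta>0 * bb / R * (\<delta>^8 / 3200)) * (\<delta>^4 / 40) * (\<Sum>x\<in>V. real (deg_into E x V) * (w x)^2)"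
      by (rule glob_dir[OF finV parts disj _ ratio]) (use partb[OF _ w] \<theta>0p bbp R1 \<delta> in \<open>auto simp: S_def\<close>)
    have "(\<theta>0 * bb / R * (\<delta>^8 / 3200)) * (\<delta>^4 / 40) = c0 / R"
      unfolding c0_def by (simp add: field_simps power_add[symmetric])
    also have "\<dots> \<ge> \<eta>" unfolding \<eta>_def using R1 by (intro divide_right_mono) auto
    finally have "\<eta> * (\<Sum>x\<in>V. real (deg_into E x V) * (w x)^2) \<le> (\<theta>0 * bb / R * (\<delta>^8 / 3200)) * (\<delta>^4 / 40) * (\<Sum>x\<in>V. real (deg_into E x V) * (w x)^2)"
      using S0[of V w] unfolding S_def by (intro mult_right_mono) auto
    thus "dir E V w \<ge> \<eta> * (\<Sum>x\<in>V. real (deg_into E x V) * (w x)^2)" using G1 by linarith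
  qed
  define r where "r = sqrt (1 - \<eta>)"
  define D where "D = \<delta> * sqrt \<delta> * n"
  have Dp: "D > 0" unfolding D_def using \<delta> n1 by (intro mult_pos_pos) auto
  define Bc where "Bc = 1 / (r * D)"
  have rp: "0 < r" "r < 1" unfolding r_def using \<eta>p \<eta>half by auto
  have Bc0: "Bc \<ge> 0" unfolding Bc_def using rp Dp by simp
  have ptw: "pW V E W (t+1) v \<le> Bc * r ^ t" if v: "v \<in> V" for v t
    using walk_core[OF G mindeg \<delta>(1) \<eta>p \<eta>half dirb v, of t] unfolding Bc_def r_def D_def n_def
    by (simp add: mult.assoc)
  define a where "a = (\<lambda>t. Max ((\<lambda>v. pW V E W (t + 1) v) ` V))"
  have a0: "0 \<le> a t" for t
  proof -
    obtain v where v: "v \<in> V" using Vne by blast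
    have "0 \<le> pW V E W (t+1) v" unfolding pW_def by (rule killed_walk_nonneg)
    also have "\<dots> \<le> a t" unfolding a_def using finV v by (intro Max_ge) auto
    finally show ?thesis .
  qed
  have a1: "a t \<le> Bc * r ^ t" for t
    unfolding a_def using finV Vne ptw by (subst Max_le_iff) auto
  have SB: "summable (\<lambda>t. real (t + 2) * a t) \<and> (\<Sum>t. real (t + 2) * a t) \<le> Bc * (1 / (1 - r)^2 + 1 / (1 - r))"
    by (rule series_bound[OF rp Bc0 a0 a1])
  have "Bc * (1 / (1 - r)^2 + 1 / (1 - r)) \<le> 16 / (D * \<eta>^2)"
    unfolding Bc_def r_def by (rule final_arith[OF \<eta>p \<eta>half Dp])
  also have "16 / (D * \<eta>^2) = Cf \<delta> \<epsilon>"
  proof -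
    have "D * \<eta>^2 = \<delta> * sqrt \<delta> * (min c0 (1/2))^2"
      unfolding D_def \<eta>_def using R1 by (simp add: R2[symmetric] power_divide)
    thus ?thesis unfolding Cf_def c0eq by simp
  qed
  finally show ?thesis using SB unfolding a_def by simp
qed

theorem lemma4p2:
  "\<forall>\<delta>::real. 0 < \<delta> \<and> \<delta> \<le> 1 \<longrightarrow>
    (\<exists>b>0. \<forall>\<epsilon>::real. 0 < \<epsilon> \<and> \<epsilon> < b \<longrightarrow>
      (\<exists>C::real. \<exists>c::real. c > 0 \<and>
        (\<forall>(V::nat set) E \<theta> k Vs W.
           simple_graph V E \<and> connected_graph V E \<and>
           (\<forall>v\<in>V. real (deg_into E v V) \<ge> \<delta> * real (card V)) \<and>
           good_decomposition V E \<epsilon> \<delta> (real (card V) powr 1.5) \<theta> k Vs \<and>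
           W \<subseteq> V \<and>
           (\<forall>i<k. real (card (W \<inter> Vs i)) \<ge> \<epsilon>^8 * \<theta> * sqrt (real (card V)))
           \<longrightarrow> summable (\<lambda>t. real (t + 2) * Max ((\<lambda>v. pW V E W (t + 1) v) ` V)) \<and>
               (\<Sum>t. real (t + 2) * Max ((\<lambda>v. pW V E W (t + 1) v) ` V)) \<le> C)))"
proof (intro allI impI)
  fix \<delta> :: real assume \<delta>: "0 < \<delta> \<and> \<delta> \<le> 1"
  show "\<exists>b>0. \<forall>\<epsilon>::real. 0 < \<epsilon> \<and> \<epsilon> < b \<longrightarrow>
      (\<exists>C::real. \<exists>c::real. c > 0 \<and>
        (\<forall>(V::nat set) E \<theta> k Vs W.
           simple_graph V E \<and> connected_graph V E \<and>
           (\<forall>v\<in>V. real (deg_into E v V) \<ge> \<delta> * real (card V)) \<and>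
           good_decomposition V E \<epsilon> \<delta> (real (card V) powr 1.5) \<theta> k Vs \<and>
           W \<subseteq> V \<and>
           (\<forall>i<k. real (card (W \<inter> Vs i)) \<ge> \<epsilon>^8 * \<theta> * sqrt (real (card V)))
           \<longrightarrow> summable (\<lambda>t. real (t + 2) * Max ((\<lambda>v. pW V E W (t + 1) v) ` V)) \<and>
               (\<Sum>t. real (t + 2) * Max ((\<lambda>v. pW V E W (t + 1) v) ` V)) \<le> C))"
  proof (rule exI[of _ 1], intro conjI allI impI)
    show "(0::real) < 1" by simp
  next
    fix \<epsilon> :: real assume \<epsilon>: "0 < \<epsilon> \<and> \<epsilon> < 1"
    show "\<exists>C::real. \<exists>c::real. c > 0 \<and>
        (\<forall>(V::nat set) E \<theta> k Vs W.
           simple_graph V E \<and> connected_graph V E \<and>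
           (\<forall>v\<in>V. real (deg_into E v V) \<ge> \<delta> * real (card V)) \<and>
           good_decomposition V E \<epsilon> \<delta> (real (card V) powr 1.5) \<theta> k Vs \<and>
           W \<subseteq> V \<and>
           (\<forall>i<k. real (card (W \<inter> Vs i)) \<ge> \<epsilon>^8 * \<theta> * sqrt (real (card V)))
           \<longrightarrow> summable (\<lambda>t. real (t + 2) * Max ((\<lambda>v. pW V E W (t + 1) v) ` V)) \<and>
               (\<Sum>t. real (t + 2) * Max ((\<lambda>v. pW V E W (t + 1) v) ` V)) \<le> C)"
  proof -
    have inner: "\<forall>(V::nat set) E \<theta> k Vs W.
           simple_graph V E \<and> connected_graph V E \<and>
           (\<forall>v\<in>V. real (deg_into E v V) \<ge> \<delta> * real (card V)) \<and>
           good_decomposition V E \<epsilon> \<delta> (real (card V) powr 1.5) \<theta> k Vs \<and>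
           W \<subseteq> V \<and>
           (\<forall>i<k. real (card (W \<inter> Vs i)) \<ge> \<epsilon>^8 * \<theta> * sqrt (real (card V)))
           \<longrightarrow> summable (\<lambda>t. real (t + 2) * Max ((\<lambda>v. pW V E W (t + 1) v) ` V)) \<and>
               (\<Sum>t. real (t + 2) * Max ((\<lambda>v. pW V E W (t + 1) v) ` V)) \<le> Cf \<delta> \<epsilon>"
    proof (intro allI impI)
      fix V :: "nat set" and E \<theta> k Vs W
      assume H: "simple_graph V E \<and> connected_graph V E \<and>
           (\<forall>v\<in>V. real (deg_into E v V) \<ge> \<delta> * real (card V)) \<and>
           good_decomposition V E \<epsilon> \<delta> (real (card V) powr 1.5) \<theta> k Vs \<and>
           W \<subseteq> V \<and>
           (\<forall>i<k. real (card (W \<inter> Vs i)) \<ge> \<epsilon>^8 * \<theta> * sqrt (real (card V)))"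
      show "summable (\<lambda>t. real (t + 2) * Max ((\<lambda>v. pW V E W (t + 1) v) ` V)) \<and>
               (\<Sum>t. real (t + 2) * Max ((\<lambda>v. pW V E W (t + 1) v) ` V)) \<le> Cf \<delta> \<epsilon>"
        by (rule main_fixed) (use H \<delta> \<epsilon> in auto)
    qed
    show ?thesis by (rule exI[of _ "Cf \<delta> \<epsilon>"], rule exI[of _ "1::real"]) (use inner in simp)
  qed
  qed
qed

end
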